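(* (Sum rule.) With $|\mathrm{SRU}_2(\gamma,\Phi;\mu)\rangle$ as defined in the context, for all $\Phi,\mu\in\mathbb{R}$ and all $\gamma$, $$I_\Phi\big(|\mathrm{SRU}_2(\tfrac{\pi}{2},\Phi;\mu)\rangle\big)+I_\gamma\big(|\mathrm{SRU}_2(\gamma,\Phi;\mu)\rangle\big)=4S_M\Big(S_M+1-S_M\cos^{4S_P}(\mu/2)\Big),$$ which is independent of $\Phi$. Moreover, $\max_\Phi I_\Phi\big(|\mathrm{SRU}_2(\tfrac{\pi}{2},\Phi;\pi)\rangle\big)=4S_M^2+2S_M$.
   Context: Spins $S_M,S_P\in\{\tfrac12,1,\dots\}$ with $S_z$-eigenbases in the standard irreducible representations of $\mathfrak{su}(2)$. Spin coherent state: $|S,S\rangle_{\theta,\phi}=\sum_{M}\sqrt{\binom{2S}{S+M}}\cos^{S+M}(\theta/2)\sin^{S-M}(\theta/2)e^{i(S-M)\phi}|S,M\rangle$. $S(\Phi)=\cos\Phi\,S_x+\sin\Phi\,S_y$. $|\mathrm{SRU}_2(\gamma,\Phi;\mu)\rangle=e^{-i\mu S_z\otimes S_z}(e^{i\gamma S(\Phi)}\otimes\mathbb{I})e^{i\mu S_z\otimes S_z}(|S_M,S_M\rangle_{\pi/2,0}\otimes|S_P,S_P\rangle_{\pi/2,0})$, first factor the main spin. $I_\gamma$ and $I_\Phi$ denote the pure-state quantum Fisher informations $4(\langle\partial\psi|\partial\psi\rangle-|\langle\psi|\partial\psi\rangle|^2)$ with respect to $\gamma$ (at fixed $\Phi$)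 and $\Phi$ (at fixed $\gamma$), respectively. *)

theory Defs
  imports "HOL-Analysis.Analysis"
begin

text \<open>Finite-dimensional complex linear algebra on an explicit finite index set I.
  Matrices and vectors are functions on an index type; only entries indexed by I matter.\<close>

type_synonym 'a cmat = "'a \<Rightarrow> 'a \<Rightarrow> complex"
type_synonym 'a cvec = "'a \<Rightarrow> complex"

definition mmul :: "'a set \<Rightarrow> 'a cmat \<Rightarrow> 'a cmat \<Rightarrow> 'a cmat" where
  "mmul I A B = (\<lambda>i j. \<Sum>k\<in>I. A i k * B k j)"

definition mvec :: "'a set \<Rightarrow> 'a cmat \<Rightarrow> 'a cvec \<Rightarrow> 'a cvec" where
  "mvec I A v = (\<lambda>i. \<Sum>k\<in>I. A i k * v k)"

definition mid :: "'a cmat" where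
  "mid = (\<lambda>i j. if i = j then 1 else 0)"

fun mpow :: "'a set \<Rightarrow> 'a cmat \<Rightarrow> nat \<Rightarrow> 'a cmat" where
  "mpow I A 0 = mid"
| "mpow I A (Suc k) = mmul I A (mpow I A k)"

definition mexp :: "'a set \<Rightarrow> 'a cmat \<Rightarrow> 'a cmat" where
  "mexp I A = (\<lambda>i j. \<Sum>k. mpow I A k i j / of_nat (fact k))"

definition mscale :: "complex \<Rightarrow> 'a cmat \<Rightarrow> 'a cmat" where
  "mscale c A = (\<lambda>i j. c * A i j)"

definition tensor :: "'a cmat \<Rightarrow> 'b cmat \<Rightarrow> ('a \<times> 'b) cmat" where
  "tensor A B = (\<lambda>(i1, i2) (j1, j2). A i1 j1 * B i2 j2)"

definition cinner :: "'a set \<Rightarrow> 'a cvec \<Rightarrow> 'a cvec \<Rightarrow> complex" where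
  "cinner I u v = (\<Sum>i\<in>I. cnj (u i) * v i)"

text \<open>Spin S = n/2 (n = 2S \<ge> 1). Basis |S,M\<rangle> indexed by j \<in> {0..n}, with M = j - n/2.\<close>

definition spin_S :: "nat \<Rightarrow> real" where
  "spin_S n = real n / 2"

definition spin_M :: "nat \<Rightarrow> nat \<Rightarrow> real" where
  "spin_M n j = real j - real n / 2"

definition spin_idx :: "nat \<Rightarrow> nat set" where
  "spin_idx n = {0..n}"

definition Splus :: "nat \<Rightarrow> nat cmat" where
  "Splus n = (\<lambda>i j. if i = Suc j \<and> i \<le> n
      then complex_of_real (sqrt (spin_S n * (spin_S n + 1) - spin_M n j * (spin_M n j + 1)))
      else 0)"

definition Sminus :: "nat \<Rightarrow> nat cmat" where
  "Sminus n = (\<lambda>i j. cnj (Splus n j i))"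

definition Sx :: "nat \<Rightarrow> nat cmat" where
  "Sx n = (\<lambda>i j. (Splus n i j + Sminus n i j) / 2)"

definition Sy :: "nat \<Rightarrow> nat cmat" where
  "Sy n = (\<lambda>i j. (Splus n i j - Sminus n i j) / (2 * \<i>))"

definition Sz :: "nat \<Rightarrow> nat cmat" where
  "Sz n = (\<lambda>i j. if i = j \<and> j \<le> n then complex_of_real (spin_M n j) else 0)"

definition SPhi :: "nat \<Rightarrow> real \<Rightarrow> nat cmat" where
  "SPhi n \<Phi> = (\<lambda>i j. complex_of_real (cos \<Phi>) * Sx n i j + complex_of_real (sin \<Phi>) * Sy n i j)"

text \<open>Spin coherent state |S,S\<rangle>_{\<theta>,\<phi>}; component at M = j - S (so S+M = j, S-M = n-j).\<close>
definition coherent :: "nat \<Rightarrow> real \<Rightarrow> real \<Rightarrow> nat cvec" where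
  "coherent n \<theta> \<phi> = (\<lambda>j. if j \<le> n then
      complex_of_real (sqrt (real (n choose j)) * cos (\<theta>/2) ^ j * sin (\<theta>/2) ^ (n - j))
      * exp (\<i> * complex_of_real (real (n - j) * \<phi>))
    else 0)"

definition two_idx :: "nat \<Rightarrow> nat \<Rightarrow> (nat \<times> nat) set" where
  "two_idx nM nP = spin_idx nM \<times> spin_idx nP"

definition SRU2 :: "nat \<Rightarrow> nat \<Rightarrow> real \<Rightarrow> real \<Rightarrow> real \<Rightarrow> (nat \<times> nat) cvec" where
  "SRU2 nM nP \<gamma> \<Phi> \<mu> =
    (let I = two_idx nM nP;
         ZZ = tensor (Sz nM) (Sz nP);
         U1 = mexp I (mscale (- \<i> * complex_of_real \<mu>) ZZ);
         U2 = mexp I (mscale (\<i> * complex_of_real \<mu>) ZZ);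
         G = tensor (mexp (spin_idx nM) (mscale (\<i> * complex_of_real \<gamma>) (SPhi nM \<Phi>))) mid;
         psi0 = (\<lambda>(j, k). coherent nM (pi/2) 0 j * coherent nP (pi/2) 0 k)
     in mvec I U1 (mvec I G (mvec I U2 psi0)))"

definition qfi :: "'a set \<Rightarrow> (real \<Rightarrow> 'a cvec) \<Rightarrow> real \<Rightarrow> real" where
  "qfi I \<psi> t =
    (let d\<psi> = (\<lambda>i. vector_derivative (\<lambda>s. \<psi> s i) (at t))
     in 4 * (Re (cinner I d\<psi> d\<psi>) - (cmod (cinner I (\<psi> t) d\<psi>))\<^sup>2))"

end

theory Submission
  imports Defs
begin


lemma mmul_assoc: "finite I \<Longrightarrow> mmul I (mmul I A B) C = mmul I A (mmul I B C)"
  unfolding mmul_def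
  by (auto intro!: ext simp: sum_distrib_left sum_distrib_right mult.assoc intro: sum.swap)

lemma mid_mmul: "finite I \<Longrightarrow> i \<in> I \<Longrightarrow> mmul I mid A i j = A i j"
  unfolding mmul_def mid_def by (simp add: if_distrib[of "\<lambda>x. x * _"] cong: if_cong)

lemma mmul_mid: "finite I \<Longrightarrow> j \<in> I \<Longrightarrow> mmul I A mid i j = A i j"
proof -
  assume "finite I" "j \<in> I"
  have eq: "(\<lambda>k. A i k * (if k = j then 1 else 0)) = (\<lambda>k. if k = j then A i j else 0)" by auto
  show ?thesis unfolding mmul_def mid_def eq using \<open>finite I\<close> \<open>j \<in> I\<close> by simp
qed

lemma mpow_scale: "mpow I (mscale c A) k = mscale (c ^ k) (mpow I A k)"
  by (induction k) (auto simp: mscale_def mmul_def mid_def sum_distrib_left mult_ac intro!: ext)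

lemma mpow_commute:
  assumes "finite I" "i \<in> I" "j \<in> I"
  shows "mmul I (mpow I A k) A i j = mpow I A (Suc k) i j"
  using assms(2,3)
proof (induction k arbitrary: i j)
  case 0
  then show ?case using assms(1) by (simp add: mid_mmul mmul_mid)
next
  case (Suc k)
  have "mmul I (mpow I A (Suc k)) A i j = mmul I A (mmul I (mpow I A k) A) i j"
    using assms(1) by (simp add: mmul_assoc)
  also have "\<dots> = mmul I A (mpow I A (Suc k)) i j"
  proof -
    have "\<And>l. l \<in> I \<Longrightarrow> mmul I (mpow I A k) A l j = mpow I A (Suc k) l j"
      using Suc.IH Suc.prems(2) by blast
    then show ?thesis unfolding mmul_def[of I A "mmul I (mpow I A k) A"] mmul_def[of I A "mpow I A (Suc k)"]
      by (intro sum.cong) auto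
  qed
  finally show ?case by simp
qed

definition mnrm :: "'a set \<Rightarrow> 'a cmat \<Rightarrow> real" where
  "mnrm I A = (\<Sum>i\<in>I. \<Sum>l\<in>I. cmod (A i l))"

lemma entry_le_mnrm: "finite I \<Longrightarrow> i \<in> I \<Longrightarrow> l \<in> I \<Longrightarrow> cmod (A i l) \<le> mnrm I A"
proof -
  assume f: "finite I" and il: "i \<in> I" "l \<in> I"
  have "cmod (A i l) \<le> (\<Sum>l\<in>I. cmod (A i l))"
    using f il by (intro member_le_sum) auto
  also have "\<dots> \<le> mnrm I A" unfolding mnrm_def
    using f il by (intro member_le_sum[of i I "\<lambda>i. \<Sum>l\<in>I. cmod (A i l)"]) (auto intro: sum_nonneg)
  finally show ?thesis .
qed

lemma mnrm_nonneg: "0 \<le> mnrm I A"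
  unfolding mnrm_def by (intro sum_nonneg) auto

lemma mpow_bound:
  assumes "finite I" "i \<in> I"
  shows "cmod (mpow I A k i j) \<le> (real (card I) * mnrm I A) ^ k"
  using assms(2)
proof (induction k arbitrary: i)
  case 0
  then show ?case by (simp add: mid_def)
next
  case (Suc k)
  have "cmod (mpow I A (Suc k) i j) \<le> (\<Sum>l\<in>I. cmod (A i l) * cmod (mpow I A k l j))"
    by (simp add: mmul_def norm_mult[symmetric] sum_norm_le)
  also have "\<dots> \<le> (\<Sum>l\<in>I. mnrm I A * (real (card I) * mnrm I A) ^ k)"
    using Suc assms(1) by (intro sum_mono mult_mono entry_le_mnrm) (auto intro: mnrm_nonneg)
  also have "\<dots> = (real (card I) * mnrm I A) ^ Suc k" by simp
  finally show ?case .
qed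

definition ecoef :: "'a set \<Rightarrow> 'a cmat \<Rightarrow> 'a \<Rightarrow> 'a \<Rightarrow> nat \<Rightarrow> complex" where
  "ecoef I A i j k = mpow I A k i j / of_nat (fact k)"

lemma mexp_series: "mexp I (mscale z A) i j = (\<Sum>k. ecoef I A i j k * z ^ k)"
  unfolding mexp_def ecoef_def mpow_scale by (simp add: mscale_def mult_ac)

lemma ecoef_summable:
  assumes "finite I" "i \<in> I"
  shows "summable (\<lambda>k. ecoef I A i j k * z ^ k)"
proof (rule summable_comparison_test')
  let ?C = "real (card I) * mnrm I A * cmod z"
  show "summable (\<lambda>k. inverse (fact k) * ?C ^ k)" by (rule summable_exp)
  fix k :: nat
  have "norm (ecoef I A i j k * z ^ k) = cmod (mpow I A k i j) * cmod z ^ k / fact k"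
    unfolding ecoef_def by (simp add: norm_mult norm_divide norm_power)
  also have "\<dots> \<le> (real (card I) * mnrm I A) ^ k * cmod z ^ k / fact k"
    using mpow_bound[OF assms] by (intro divide_right_mono mult_right_mono) auto
  also have "\<dots> = inverse (fact k) * ?C ^ k" by (simp add: power_mult_distrib field_simps)
  finally show "norm (ecoef I A i j k * z ^ k) \<le> inverse (fact k) * ?C ^ k" .
qed

lemma diffs_ecoef: "diffs (ecoef I A i j) k = mpow I A (Suc k) i j / of_nat (fact k)"
proof -
  have nz: "(of_nat (fact k) :: complex) \<noteq> 0" by simp
  have c: "(of_nat (Suc k) :: complex) \<noteq> 0" by (simp del: of_nat_Suc)
  have "diffs (ecoef I A i j) k = of_nat (Suc k) * (mpow I A (Suc k) i j / (of_nat (Suc k) * of_nat (fact k)))"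
    unfolding diffs_def ecoef_def by (simp only: fact_Suc of_nat_mult of_nat_id)
  also have "\<dots> = mpow I A (Suc k) i j / of_nat (fact k)"
    by (simp only: times_divide_eq_right) (rule mult_divide_mult_cancel_left[OF c])
  finally show ?thesis .
qed

lemma mmul_A_mexp:
  assumes "finite I" "i \<in> I"
  shows "mmul I A (mexp I (mscale z A)) i j = (\<Sum>k. diffs (ecoef I A i j) k * z ^ k)"
proof -
  have "mmul I A (mexp I (mscale z A)) i j = (\<Sum>l\<in>I. A i l * (\<Sum>k. ecoef I A l j k * z ^ k))"
    unfolding mmul_def mexp_series ..
  also have "\<dots> = (\<Sum>l\<in>I. \<Sum>k. A i l * (ecoef I A l j k * z ^ k))"
    using ecoef_summable[OF assms(1)] by (intro sum.cong refl suminf_mult[symmetric]) auto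
  also have "\<dots> = (\<Sum>k. \<Sum>l\<in>I. A i l * (ecoef I A l j k * z ^ k))"
    using ecoef_summable[OF assms(1)] by (intro suminf_sum[symmetric] summable_mult) auto
  also have "\<dots> = (\<Sum>k. diffs (ecoef I A i j) k * z ^ k)"
    unfolding diffs_ecoef by (simp add: ecoef_def mmul_def sum_distrib_left sum_divide_distrib mult_ac)
  finally show ?thesis .
qed

lemma mmul_mexp_A:
  assumes "finite I" "i \<in> I" "j \<in> I"
  shows "mmul I (mexp I (mscale z A)) A i j = (\<Sum>k. diffs (ecoef I A i j) k * z ^ k)"
proof -
  have "mmul I (mexp I (mscale z A)) A i j = (\<Sum>l\<in>I. (\<Sum>k. ecoef I A i l k * z ^ k) * A l j)"
    unfolding mmul_def mexp_series ..
  also have "\<dots> = (\<Sum>l\<in>I. \<Sum>k. ecoef I A i l k * z ^ k * A l j)"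
    by (intro sum.cong refl) (rule suminf_mult2, rule ecoef_summable[OF assms(1,2)])
  also have "\<dots> = (\<Sum>k. \<Sum>l\<in>I. ecoef I A i l k * z ^ k * A l j)"
    using ecoef_summable[OF assms(1,2)] by (intro suminf_sum[symmetric] summable_mult2) auto
  also have "\<dots> = (\<Sum>k. diffs (ecoef I A i j) k * z ^ k)"
    unfolding diffs_ecoef mpow_commute[OF assms, symmetric]
    by (simp add: ecoef_def mmul_def sum_distrib_left sum_divide_distrib mult_ac)
  finally show ?thesis .
qed

lemma mexp_commute:
  assumes "finite I" "i \<in> I" "j \<in> I"
  shows "mmul I A (mexp I (mscale z A)) i j = mmul I (mexp I (mscale z A)) A i j"
  using mmul_A_mexp[OF assms(1,2)] mmul_mexp_A[OF assms] by simp

lemma mexp_deriv: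
  assumes "finite I" "i \<in> I"
  shows "((\<lambda>z. mexp I (mscale z A) i j) has_field_derivative mmul I A (mexp I (mscale z A)) i j) (at z)"
  unfolding mexp_series mmul_A_mexp[OF assms]
  by (rule termdiffs_strong_converges_everywhere) (rule ecoef_summable[OF assms])

lemma mexp_zero: "finite I \<Longrightarrow> i \<in> I \<Longrightarrow> mexp I (mscale 0 A) i j = mid i j"
proof -
  assume "finite I" "i \<in> I"
  have "mexp I (mscale 0 A) i j = (\<Sum>k. ecoef I A i j k * 0 ^ k)" by (rule mexp_series)
  also have "\<dots> = ecoef I A i j 0" by (rule powser_zero)
  finally show ?thesis by (simp add: ecoef_def)
qed



lemma deriv_mmul:
  assumes "finite I"
    and "\<And>l. l \<in> I \<Longrightarrow> ((\<lambda>z. X z i l) has_field_derivative X' l) (at z)"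
    and "\<And>l. l \<in> I \<Longrightarrow> ((\<lambda>z. Y z l j) has_field_derivative Y' l) (at z)"
  shows "((\<lambda>z. mmul I (X z) (Y z) i j) has_field_derivative (\<Sum>l\<in>I. X' l * Y z l j + X z i l * Y' l)) (at z)"
  unfolding mmul_def
  by (rule DERIV_sum) (rule DERIV_cong[OF DERIV_mult[OF assms(2) assms(3)]], auto simp: mult_ac)

lemma mexp_deriv_right:
  assumes "finite I" "i \<in> I" "j \<in> I"
  shows "((\<lambda>z. mexp I (mscale z A) i j) has_field_derivative mmul I (mexp I (mscale z A)) A i j) (at z)"
  using mexp_deriv[OF assms(1,2), where A=A and j=j and z=z] mexp_commute[OF assms, where A=A and z=z] by simp

lemma mexp_deriv_neg:
  assumes "finite I" "i \<in> I"
  shows "((\<lambda>z. mexp I (mscale (-z) A) i j) has_field_derivative - mmul I A (mexp I (mscale (-z) A)) i j) (at z)"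
  using DERIV_chain2[OF mexp_deriv[OF assms, where A=A and j=j and z="-z"] DERIV_minus[OF DERIV_ident]] by simp

lemma mexp_deriv_neg_right:
  assumes "finite I" "i \<in> I" "j \<in> I"
  shows "((\<lambda>z. mexp I (mscale (-z) A) i j) has_field_derivative - mmul I (mexp I (mscale (-z) A)) A i j) (at z)"
  using mexp_deriv_neg[OF assms(1,2), where A=A and j=j and z=z] mexp_commute[OF assms, where A=A and z="-z"] by simp

lemma const_from_deriv0:
  fixes f :: "complex \<Rightarrow> complex"
  assumes "\<And>z. (f has_field_derivative 0) (at z)"
  shows "f z = f 0"
proof -
  obtain c where "\<forall>x\<in>UNIV. f x = c"
    using has_field_derivative_zero_constant[of UNIV f] assms by auto
  then show ?thesis by simp
qed

lemma mexp_unit: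
  assumes "finite I" "i \<in> I" "j \<in> I"
  shows "mmul I (mexp I (mscale (-z) A)) (mexp I (mscale z A)) i j = mid i j"
proof -
  let ?F = "\<lambda>z. mmul I (mexp I (mscale (-z) A)) (mexp I (mscale z A)) i j"
  have "(?F has_field_derivative 0) (at w)" for w
  proof -
    have "(?F has_field_derivative (\<Sum>l\<in>I. (- mmul I (mexp I (mscale (-w) A)) A i l) * mexp I (mscale w A) l j
              + mexp I (mscale (-w) A) i l * mmul I A (mexp I (mscale w A)) l j)) (at w)"
      by (rule deriv_mmul[OF assms(1)], rule mexp_deriv_neg_right[OF assms(1,2)], simp, rule mexp_deriv[OF assms(1)])
    moreover have "(\<Sum>l\<in>I. (- mmul I (mexp I (mscale (-w) A)) A i l) * mexp I (mscale w A) l j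
              + mexp I (mscale (-w) A) i l * mmul I A (mexp I (mscale w A)) l j) = 
          - mmul I (mmul I (mexp I (mscale (-w) A)) A) (mexp I (mscale w A)) i j
          + mmul I (mexp I (mscale (-w) A)) (mmul I A (mexp I (mscale w A))) i j"
      unfolding mmul_def by (simp add: sum.distrib sum_negf sum_subtractf)
    moreover have "\<dots> = 0" by (simp add: mmul_assoc[OF assms(1)])
    ultimately show ?thesis by simp
  qed
  then have "?F z = ?F 0" by (rule const_from_deriv0)
  also have "\<dots> = mmul I mid mid i j"
    unfolding mmul_def using mexp_zero[OF assms(1)] assms(2) by (intro sum.cong) auto
  also have "\<dots> = mid i j" by (rule mid_mmul[OF assms(1,2)])
  finally show ?thesis .
qed

lemma ode_zero:
  assumes fin: "finite I"
    and D: "\<And>z i j. i \<in> I \<Longrightarrow> j \<in> I \<Longrightarrow> ((\<lambda>z. W z i j) has_field_derivative mmul I (W z) A i j) (at z)"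
    and W0: "\<And>i j. i \<in> I \<Longrightarrow> j \<in> I \<Longrightarrow> W 0 i j = 0"
    and ij: "i \<in> I" "j \<in> I"
  shows "W z i j = 0"
proof -
  let ?e = "\<lambda>z. mexp I (mscale z A)"
  let ?V = "\<lambda>z i j. mmul I (W z) (?e (-z)) i j"
  have V0: "?V z i j = 0" if i: "i \<in> I" and j: "j \<in> I" for z i j
  proof -
    have "((\<lambda>z. ?V z i j) has_field_derivative 0) (at w)" for w
    proof -
      have "((\<lambda>z. ?V z i j) has_field_derivative (\<Sum>l\<in>I. mmul I (W w) A i l * ?e (-w) l j
              + W w i l * (- mmul I A (?e (-w)) l j))) (at w)"
        by (rule deriv_mmul[OF fin], rule D[OF i], simp, rule mexp_deriv_neg[OF fin])
      moreover have "(\<Sum>l\<in>I. mmul I (W w) A i l * ?e (-w) l j + W w i l * (- mmul I A (?e (-w)) l j))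
          = mmul I (mmul I (W w) A) (?e (-w)) i j - mmul I (W w) (mmul I A (?e (-w))) i j"
        unfolding mmul_def by (simp add: sum.distrib sum_negf sum_subtractf)
      moreover have "\<dots> = 0" by (simp add: mmul_assoc[OF fin])
      ultimately show ?thesis by simp
    qed
    then have "?V z i j = ?V 0 i j" by (rule const_from_deriv0)
    also have "\<dots> = 0" unfolding mmul_def using W0[OF i] by simp
    finally show ?thesis .
  qed
  have "W z i j = mmul I (W z) mid i j" using mmul_mid[OF fin ij(2)] by simp
  also have "\<dots> = mmul I (W z) (mmul I (?e (-z)) (?e z)) i j"
    unfolding mmul_def[of I "W z"] using mexp_unit[OF fin _ ij(2)] by (intro sum.cong) auto
  also have "\<dots> = mmul I (mmul I (W z) (?e (-z))) (?e z) i j" by (simp add: mmul_assoc[OF fin])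
  also have "\<dots> = 0" unfolding mmul_def[of I "mmul I _ _"] using V0[OF ij(1)] by simp
  finally show ?thesis .
qed



definition pp :: "nat \<Rightarrow> nat \<Rightarrow> real" where
  "pp n j = sqrt (real (n - j) * real (Suc j))"

lemma pp_sq: "pp n j * pp n j = real (n - j) * real (Suc j)"
  unfolding pp_def by simp

lemma Splus_eq: "Splus n i j = (if i = Suc j \<and> i \<le> n then complex_of_real (pp n j) else 0)"
proof (cases "i = Suc j \<and> i \<le> n")
  case True
  then have jn: "j < n" by simp
  have "spin_S n * (spin_S n + 1) - spin_M n j * (spin_M n j + 1) = real (n - j) * real (Suc j)"
    using jn unfolding spin_S_def spin_M_def by (simp add: of_nat_diff algebra_simps power2_eq_square field_simps)
  then show ?thesis using True unfolding Splus_def pp_def by simp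
next
  case False
  then show ?thesis unfolding Splus_def by (simp only: if_not_P[OF False] if_False)
qed

lemma Sminus_eq: "Sminus n i j = (if j = Suc i \<and> j \<le> n then complex_of_real (pp n i) else 0)"
  unfolding Sminus_def Splus_eq by simp

lemma sum_delta_idx: fixes k n :: nat shows "(\<Sum>l\<in>{0..n}. if l = k then f l else 0) = (if k \<le> n then f k else (0::complex))"
  using sum.delta[OF finite_atLeastAtMost, of k f 0 n] by simp

lemma mvec_Splus: fixes u :: "nat \<Rightarrow> complex" shows "mvec {0..n} (Splus n) u j = (if 0 < j \<and> j \<le> n then pp n (j - 1) * u (j - 1) else 0)"
proof -
  have "mvec {0..n} (Splus n) u j = (\<Sum>l\<in>{0..n}. if l = j - 1 then (if 0 < j \<and> j \<le> n then pp n (j - 1) * u (j - 1) else 0) else 0)"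
    unfolding mvec_def Splus_eq by (intro sum.cong) auto
  also have "\<dots> = (if 0 < j \<and> j \<le> n then pp n (j - 1) * u (j - 1) else 0)"
    by (subst sum_delta_idx) auto
  finally show ?thesis .
qed

lemma mvec_Sminus: fixes u :: "nat \<Rightarrow> complex" shows "mvec {0..n} (Sminus n) u j = (if j < n then pp n j * u (Suc j) else 0)"
proof -
  have "mvec {0..n} (Sminus n) u j = (\<Sum>l\<in>{0..n}. if l = Suc j then (if j < n then pp n j * u (Suc j) else 0) else 0)"
    unfolding mvec_def Sminus_eq by (intro sum.cong) auto
  also have "\<dots> = (if j < n then pp n j * u (Suc j) else 0)"
    by (subst sum_delta_idx) auto
  finally show ?thesis .
qed

lemma mvec_Sz: fixes u :: "nat \<Rightarrow> complex" shows "mvec {0..n} (Sz n) u j = (if j \<le> n then complex_of_real (spin_M n j) * u j else 0)"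
proof -
  have "mvec {0..n} (Sz n) u j = (\<Sum>l\<in>{0..n}. if l = j then (if j \<le> n then complex_of_real (spin_M n j) * u j else 0) else 0)"
    unfolding mvec_def Sz_def by (intro sum.cong) auto
  also have "\<dots> = (if j \<le> n then complex_of_real (spin_M n j) * u j else 0)"
    by (subst sum_delta_idx) auto
  finally show ?thesis .
qed

lemma mmul_as_mvec: "mmul I A X i j = mvec I A (\<lambda>l. X l j) i"
  unfolding mmul_def mvec_def ..

lemma mmul_Splus_right: fixes X :: "nat cmat" shows "mmul {0..n} X (Splus n) i j = (if j < n then X i (Suc j) * pp n j else 0)"
proof -
  have "mmul {0..n} X (Splus n) i j = (\<Sum>l\<in>{0..n}. if l = Suc j then (if j < n then X i (Suc j) * pp n j else 0) else 0)"
    unfolding mmul_def Splus_eq by (intro sum.cong) auto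
  also have "\<dots> = (if j < n then X i (Suc j) * pp n j else 0)"
    by (subst sum_delta_idx) auto
  finally show ?thesis .
qed

lemma mmul_Sminus_right: fixes X :: "nat cmat" shows "mmul {0..n} X (Sminus n) i j = (if 0 < j \<and> j \<le> n then X i (j - 1) * pp n (j - 1) else 0)"
proof -
  have "mmul {0..n} X (Sminus n) i j = (\<Sum>l\<in>{0..n}. if l = j - 1 then (if 0 < j \<and> j \<le> n then X i (j - 1) * pp n (j - 1) else 0) else 0)"
    unfolding mmul_def Sminus_eq by (intro sum.cong) auto
  also have "\<dots> = (if 0 < j \<and> j \<le> n then X i (j - 1) * pp n (j - 1) else 0)"
    by (subst sum_delta_idx) auto
  finally show ?thesis .
qed

lemma mmul_Sz_right: fixes X :: "nat cmat" shows "mmul {0..n} X (Sz n) i j = (if j \<le> n then X i j * complex_of_real (spin_M n j) else 0)"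
proof -
  have "mmul {0..n} X (Sz n) i j = (\<Sum>l\<in>{0..n}. if l = j then (if j \<le> n then X i j * complex_of_real (spin_M n j) else 0) else 0)"
    unfolding mmul_def Sz_def by (intro sum.cong) auto
  also have "\<dots> = (if j \<le> n then X i j * complex_of_real (spin_M n j) else 0)"
    by (subst sum_delta_idx) auto
  finally show ?thesis .
qed

lemma mmul_add_left: "mmul I (\<lambda>i j. A i j + B i j) X = (\<lambda>i j. mmul I A X i j + mmul I B X i j)"
  unfolding mmul_def by (auto intro!: ext simp: distrib_right sum.distrib)

lemma mmul_sub_left: "mmul I (\<lambda>i j. A i j - B i j) X = (\<lambda>i j. mmul I A X i j - mmul I B X i j)"
  unfolding mmul_def by (auto intro!: ext simp: left_diff_distrib sum_subtractf)

lemma mmul_div_left: "mmul I (\<lambda>i j. A i j / c) X = (\<lambda>i j. mmul I A X i j / c)"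
  unfolding mmul_def by (auto intro!: ext simp: sum_divide_distrib)

lemma Sx_alt: "Sx n = (\<lambda>i j. (Splus n i j + Sminus n i j) / 2)" unfolding Sx_def ..
lemma Sy_alt: "Sy n = (\<lambda>i j. (Splus n i j - Sminus n i j) / (2 * \<i>))" unfolding Sy_def ..

lemma mmul_Sx_left: fixes X :: "nat cmat" shows "mmul {0..n} (Sx n) X i j =
   ((if 0 < i \<and> i \<le> n then pp n (i - 1) * X (i - 1) j else 0) + (if i < n then pp n i * X (Suc i) j else 0)) / 2"
  unfolding Sx_alt mmul_div_left mmul_add_left mmul_as_mvec[of _ "Splus n"] mmul_as_mvec[of _ "Sminus n"]
    mvec_Splus mvec_Sminus ..

lemma mmul_Sy_left: fixes X :: "nat cmat" shows "mmul {0..n} (Sy n) X i j =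
   ((if 0 < i \<and> i \<le> n then pp n (i - 1) * X (i - 1) j else 0) - (if i < n then pp n i * X (Suc i) j else 0)) / (2 * \<i>)"
  unfolding Sy_alt mmul_div_left mmul_sub_left mmul_as_mvec[of _ "Splus n"] mmul_as_mvec[of _ "Sminus n"]
    mvec_Splus mvec_Sminus ..

lemma mmul_Sz_left: fixes X :: "nat cmat" shows "mmul {0..n} (Sz n) X i j = (if i \<le> n then complex_of_real (spin_M n i) * X i j else 0)"
  unfolding mmul_as_mvec[of _ "Sz n"] mvec_Sz ..

lemma comm_Sx_Sz:
  assumes "i \<le> n" "j \<le> n"
  shows "mmul {0..n} (Sx n) (Sz n) i j - mmul {0..n} (Sz n) (Sx n) i j = - \<i> * Sy n i j"
  using assms
  unfolding mmul_Sz_right mmul_Sz_left Sx_def Sy_def Splus_eq Sminus_eq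
  by (auto simp: spin_M_def field_simps)

lemma comm_Sx_Sy:
  assumes "i \<le> n" "j \<le> n"
  shows "mmul {0..n} (Sx n) (Sy n) i j - mmul {0..n} (Sy n) (Sx n) i j = \<i> * Sz n i j"
proof -
  have pq: "complex_of_real (pp n k) * complex_of_real (pp n k) = of_nat (n - k) * of_nat (Suc k)" for k
    by (metis of_real_mult pp_sq of_real_of_nat_eq)
  show ?thesis
    using assms
    apply (simp only: mmul_Sx_left mmul_Sy_left)
    apply (auto simp: Sx_def Sy_def Sz_def Splus_eq Sminus_eq spin_M_def field_simps pq)
    done
qed



definition AX :: "nat \<Rightarrow> nat cmat" where "AX n = mscale \<i> (Sx n)"
definition EE :: "nat \<Rightarrow> complex \<Rightarrow> nat cmat" where "EE n z = mexp {0..n} (mscale z (AX n))"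

definition CC :: "nat \<Rightarrow> complex \<Rightarrow> nat cmat" where
  "CC n z = (\<lambda>a b. cos z * Sz n a b - sin z * Sy n a b)"
definition CC' :: "nat \<Rightarrow> complex \<Rightarrow> nat cmat" where
  "CC' n z = (\<lambda>a b. - sin z * Sz n a b - cos z * Sy n a b)"

lemma CC_deriv: "((\<lambda>z. CC n z a b) has_field_derivative CC' n z a b) (at z)"
  unfolding CC_def CC'_def by (auto intro!: derivative_eq_intros)

lemma comm_key:
  assumes "l \<le> n" "j \<le> n"
  shows "mmul {0..n} (AX n) (CC n z) l j + CC' n z l j = mmul {0..n} (CC n z) (AX n) l j"
proof -
  have e1: "mmul {0..n} (AX n) (CC n z) l j = \<i> * cos z * mmul {0..n} (Sx n) (Sz n) l j - \<i> * sin z * mmul {0..n} (Sx n) (Sy n) l j"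
    unfolding mmul_def AX_def CC_def mscale_def by (simp add: sum_distrib_left sum_subtractf algebra_simps)
  have e2: "mmul {0..n} (CC n z) (AX n) l j = \<i> * cos z * mmul {0..n} (Sz n) (Sx n) l j - \<i> * sin z * mmul {0..n} (Sy n) (Sx n) l j"
    unfolding mmul_def AX_def CC_def mscale_def by (simp add: sum_distrib_left sum_subtractf algebra_simps)
  have c1: "mmul {0..n} (Sx n) (Sz n) l j = mmul {0..n} (Sz n) (Sx n) l j - \<i> * Sy n l j"
    using comm_Sx_Sz[OF assms] by (simp add: algebra_simps)
  have c2: "mmul {0..n} (Sx n) (Sy n) l j = mmul {0..n} (Sy n) (Sx n) l j + \<i> * Sz n l j"
    using comm_Sx_Sy[OF assms] by (simp add: algebra_simps)
  show ?thesis unfolding e1 e2 CC'_def c1 c2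
    by (simp add: algebra_simps)
qed

lemma E_rot_all:
  assumes "i \<le> n" "j \<le> n"
  shows "mmul {0..n} (Sz n) (EE n z) i j = mmul {0..n} (EE n z) (CC n z) i j"
proof -
  let ?I = "{0..n}"
  let ?E = "EE n"
  let ?W = "\<lambda>z i j. mmul ?I (Sz n) (?E z) i j - mmul ?I (?E z) (CC n z) i j"
  have fin: "finite ?I" by simp
  have D: "((\<lambda>z. ?W z i j) has_field_derivative mmul ?I (?W z) (AX n) i j) (at z)"
    if i: "i \<in> ?I" and j: "j \<in> ?I" for z i j
  proof -
    have d1: "((\<lambda>z. mmul ?I (Sz n) (?E z) i j) has_field_derivative
               (\<Sum>l\<in>?I. 0 * ?E z l j + Sz n i l * mmul ?I (AX n) (?E z) l j)) (at z)"
      by (rule deriv_mmul[OF fin]) (auto simp: EE_def intro: mexp_deriv)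
    have d2: "((\<lambda>z. mmul ?I (?E z) (CC n z) i j) has_field_derivative
               (\<Sum>l\<in>?I. mmul ?I (?E z) (AX n) i l * CC n z l j + ?E z i l * CC' n z l j)) (at z)"
      apply (rule deriv_mmul[OF fin])
       apply (unfold EE_def, rule mexp_deriv_right[OF fin i], simp)
      apply (rule CC_deriv)
      done
    have s1: "(\<Sum>l\<in>?I. 0 * ?E z l j + Sz n i l * mmul ?I (AX n) (?E z) l j)
              = mmul ?I (mmul ?I (Sz n) (?E z)) (AX n) i j"
    proof -
      have "(\<Sum>l\<in>?I. 0 * ?E z l j + Sz n i l * mmul ?I (AX n) (?E z) l j)
          = mmul ?I (Sz n) (mmul ?I (?E z) (AX n)) i j"
        unfolding mmul_def[of ?I "Sz n"] using mexp_commute[OF fin _ j] by (intro sum.cong) (auto simp: EE_def)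
      then show ?thesis by (simp add: mmul_assoc[OF fin])
    qed
    have s2: "(\<Sum>l\<in>?I. mmul ?I (?E z) (AX n) i l * CC n z l j + ?E z i l * CC' n z l j)
              = mmul ?I (mmul ?I (?E z) (CC n z)) (AX n) i j"
    proof -
      have "(\<Sum>l\<in>?I. mmul ?I (?E z) (AX n) i l * CC n z l j + ?E z i l * CC' n z l j)
           = mmul ?I (mmul ?I (?E z) (AX n)) (CC n z) i j + mmul ?I (?E z) (CC' n z) i j"
        by (simp only: sum.distrib mmul_def[of ?I "mmul ?I (?E z) (AX n)" "CC n z"] mmul_def[of ?I "?E z" "CC' n z"])
      also have "\<dots> = mmul ?I (?E z) (mmul ?I (AX n) (CC n z)) i j + mmul ?I (?E z) (CC' n z) i j"
        by (simp add: mmul_assoc[OF fin])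
      also have "\<dots> = mmul ?I (?E z) (\<lambda>a b. mmul ?I (AX n) (CC n z) a b + CC' n z a b) i j"
        unfolding mmul_def by (simp add: sum.distrib distrib_left)
      also have "\<dots> = mmul ?I (?E z) (mmul ?I (CC n z) (AX n)) i j"
        unfolding mmul_def[of ?I "?E z"] using comm_key[of _ n _ z] j by (intro sum.cong) auto
      finally show ?thesis by (simp add: mmul_assoc[OF fin])
    qed
    have "mmul ?I (?W z) (AX n) i j = mmul ?I (mmul ?I (Sz n) (?E z)) (AX n) i j - mmul ?I (mmul ?I (?E z) (CC n z)) (AX n) i j"
      unfolding mmul_def[of ?I "?W z"] by (simp add: left_diff_distrib sum_subtractf mmul_def[of ?I "mmul ?I _ _"])
    then show ?thesis using DERIV_diff[OF d1 d2] s1 s2 by simp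
  qed
  have W0: "?W 0 i j = 0" if i: "i \<in> ?I" and j: "j \<in> ?I" for i j
  proof -
    have "mmul ?I (Sz n) (?E 0) i j = mmul ?I (Sz n) mid i j"
      unfolding mmul_def using mexp_zero[OF fin] by (intro sum.cong) (auto simp: EE_def)
    moreover have "mmul ?I (?E 0) (CC n 0) i j = mmul ?I mid (Sz n) i j"
      unfolding mmul_def using mexp_zero[OF fin] i by (intro sum.cong) (auto simp: EE_def CC_def)
    ultimately show ?thesis using mmul_mid[OF fin j] mid_mmul[OF fin i] by simp
  qed
  show ?thesis using ode_zero[where W="?W" and A="AX n", OF fin D W0] assms by simp
qed

lemma Sx_sym: "Sx n a b = Sx n b a"
  unfolding Sx_def Splus_eq Sminus_eq by auto

lemma Sx_real: "cnj (Sx n a b) = Sx n a b"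
  unfolding Sx_def Splus_eq Sminus_eq by auto

lemma AX_cnj: "cnj (AX n a b) = - AX n b a"
  unfolding AX_def mscale_def using Sx_real[of n a b] Sx_sym[of n a b] by simp

lemma mpow_AX_cnj:
  assumes "a \<in> {0..n}" "b \<in> {0..n}"
  shows "cnj (mpow {0..n} (AX n) k a b) = (-1) ^ k * mpow {0..n} (AX n) k b a"
  using assms(1)
proof (induction k arbitrary: a)
  case 0
  then show ?case by (simp add: mid_def)
next
  case (Suc k)
  have "cnj (mpow {0..n} (AX n) (Suc k) a b) = (\<Sum>m\<in>{0..n}. (- AX n m a) * ((-1) ^ k * mpow {0..n} (AX n) k b m))"
    using Suc.IH by (simp add: mmul_def AX_cnj)
  also have "\<dots> = (-1) ^ Suc k * mmul {0..n} (mpow {0..n} (AX n) k) (AX n) b a"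
    unfolding mmul_def by (simp add: sum_distrib_left algebra_simps)
  also have "\<dots> = (-1) ^ Suc k * mpow {0..n} (AX n) (Suc k) b a"
    using mpow_commute[of "{0..n}" b a "AX n" k] assms(2) Suc.prems by simp
  finally show ?case .
qed

lemma EE_cnj:
  assumes "a \<in> {0..n}" "b \<in> {0..n}"
  shows "cnj (EE n z a b) = EE n (- cnj z) b a"
proof -
  have fin: "finite {0..n}" by simp
  have s: "(\<lambda>k. ecoef {0..n} (AX n) a b k * z ^ k) sums EE n z a b"
    unfolding EE_def mexp_series using ecoef_summable[OF fin assms(1)] by (rule summable_sums)
  have "(\<lambda>k. cnj (ecoef {0..n} (AX n) a b k * z ^ k)) sums cnj (EE n z a b)"
    using s by (simp only: sums_cnj)
  moreover have "(\<lambda>k. cnj (ecoef {0..n} (AX n) a b k * z ^ k)) = (\<lambda>k. ecoef {0..n} (AX n) b a k * (- cnj z) ^ k)"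
  proof
    fix k
    have "cnj (ecoef {0..n} (AX n) a b k * z ^ k) = cnj (mpow {0..n} (AX n) k a b) / of_nat (fact k) * cnj z ^ k"
      by (simp add: ecoef_def)
    also have "\<dots> = ((-1) ^ k * mpow {0..n} (AX n) k b a) / of_nat (fact k) * cnj z ^ k"
      by (simp only: mpow_AX_cnj[OF assms])
    also have "\<dots> = ecoef {0..n} (AX n) b a k * (- cnj z) ^ k"
      by (simp add: ecoef_def power_minus[of "cnj z"])
    finally show "cnj (ecoef {0..n} (AX n) a b k * z ^ k) = ecoef {0..n} (AX n) b a k * (- cnj z) ^ k" .
  qed
  moreover have "(\<lambda>k. ecoef {0..n} (AX n) b a k * (- cnj z) ^ k) sums EE n (- cnj z) b a"
    unfolding EE_def mexp_series using ecoef_summable[OF fin assms(2)] by (rule summable_sums)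
  ultimately show ?thesis using sums_unique2 by metis
qed

lemma EE_unitary:
  assumes "l \<in> {0..n}" "m \<in> {0..n}"
  shows "(\<Sum>j\<in>{0..n}. cnj (EE n (of_real t) j l) * EE n (of_real t) j m) = mid l m"
proof -
  have "(\<Sum>j\<in>{0..n}. cnj (EE n (of_real t) j l) * EE n (of_real t) j m)
      = mmul {0..n} (EE n (- of_real t)) (EE n (of_real t)) l m"
    unfolding mmul_def using EE_cnj[OF _ assms(1), of _ "of_real t"] by (intro sum.cong) auto
  also have "\<dots> = mid l m" unfolding EE_def by (rule mexp_unit) (use assms in auto)
  finally show ?thesis .
qed

lemma E_rot:
  assumes "i \<le> n" "j \<le> n"
  shows "mmul {0..n} (Sz n) (EE n (of_real (pi/2))) i j = - mmul {0..n} (EE n (of_real (pi/2))) (Sy n) i j"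
proof -
  have "mmul {0..n} (Sz n) (EE n (of_real (pi/2))) i j = mmul {0..n} (EE n (of_real (pi/2))) (CC n (of_real (pi/2))) i j"
    by (rule E_rot_all[OF assms])
  also have "CC n (of_real (pi/2)) = (\<lambda>a b. - Sy n a b)"
    unfolding CC_def by (simp add: cos_of_real sin_of_real)
  finally show ?thesis unfolding mmul_def by (simp add: sum_negf)
qed



lemma binom_sum1: "(\<Sum>l\<le>n. real l * real (n choose l)) = real n * 2 ^ n / 2"
proof (cases n)
  case 0 then show ?thesis by simp
next
  case (Suc m)
  have "(\<Sum>l\<le>n. real l * real (n choose l)) = real (\<Sum>l\<le>n. l * (n choose l))" by simp
  also have "\<dots> = real (n * 2 ^ (n - 1))" by (simp only: choose_linear_sum)
  also have "\<dots> = real n * 2 ^ n / 2" using Suc by (simp add: algebra_simps)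
  finally show ?thesis .
qed

lemma binom_sum0: "(\<Sum>l\<le>n. real (n choose l)) = 2 ^ n"
proof -
  have "(\<Sum>l\<le>n. real (n choose l)) = real (\<Sum>l\<le>n. (n choose l))" by simp
  also have "\<dots> = 2 ^ n" by (simp only: choose_row_sum) simp
  finally show ?thesis .
qed

lemma binom_sum2: "(\<Sum>l\<le>n. real l ^ 2 * real (n choose l)) = real n * (real n + 1) * 2 ^ n / 4"
proof (cases n)
  case 0 then show ?thesis by simp
next
  case (Suc m)
  have "(\<Sum>l\<le>Suc m. real l ^ 2 * real (Suc m choose l)) = (\<Sum>i\<le>m. real (Suc i) ^ 2 * real (Suc m choose Suc i))"
    by (simp only: sum.atMost_Suc_shift) simp
  also have "\<dots> = (\<Sum>i\<le>m. real (Suc m) * (real i * real (m choose i) + real (m choose i)))"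
  proof (intro sum.cong refl)
    fix i
    have e: "real (Suc i) * real (Suc m choose Suc i) = real (Suc m) * real (m choose i)"
      using Suc_times_binomial[of i m] by (metis of_nat_mult)
    have "real (Suc i) ^ 2 * real (Suc m choose Suc i) = real (Suc i) * (real (Suc i) * real (Suc m choose Suc i))"
      by (simp only: power2_eq_square mult.assoc)
    also have "\<dots> = real (Suc i) * (real (Suc m) * real (m choose i))" by (simp only: e)
    also have "\<dots> = real (Suc m) * (real i * real (m choose i) + real (m choose i))"
      by (simp add: algebra_simps)
    finally show "real (Suc i) ^ 2 * real (Suc m choose Suc i) = real (Suc m) * (real i * real (m choose i) + real (m choose i))" .
  qed
  also have "\<dots> = real (Suc m) * ((\<Sum>i\<le>m. real i * real (m choose i)) + (\<Sum>i\<le>m. real (m choose i)))"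
    by (simp only: sum_distrib_left[symmetric] sum.distrib)
  also have "\<dots> = real (Suc m) * (real m * 2 ^ m / 2 + 2 ^ m)"
    by (simp only: binom_sum1 binom_sum0)
  also have "\<dots> = real n * (real n + 1) * 2 ^ n / 4" using Suc by (simp add: field_simps)
  finally show ?thesis using Suc by simp
qed

definition hh :: "nat \<Rightarrow> nat \<Rightarrow> real" where "hh n l = real (n choose l) / 2 ^ n"

lemma hh_poly: "(\<Sum>l\<le>n. hh n l * (\<alpha> + \<beta> * real l + \<gamma> * real l ^ 2)) = \<alpha> + \<beta> * real n / 2 + \<gamma> * real n * (real n + 1) / 4"
proof -
  have "(\<Sum>l\<le>n. hh n l * (\<alpha> + \<beta> * real l + \<gamma> * real l ^ 2))
     = (\<alpha> * (\<Sum>l\<le>n. real (n choose l)) + \<beta> * (\<Sum>l\<le>n. real l * real (n choose l)) + \<gamma> * (\<Sum>l\<le>n. real l ^ 2 * real (n choose l))) / 2 ^ n"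
  proof -
    have "\<And>l. hh n l * (\<alpha> + \<beta> * real l + \<gamma> * real l ^ 2)
       = (\<alpha> * real (n choose l) + \<beta> * (real l * real (n choose l)) + \<gamma> * (real l ^ 2 * real (n choose l))) / 2 ^ n"
      unfolding hh_def by (simp add: field_simps)
    then have "(\<Sum>l\<le>n. hh n l * (\<alpha> + \<beta> * real l + \<gamma> * real l ^ 2))
       = (\<Sum>l\<le>n. (\<alpha> * real (n choose l) + \<beta> * (real l * real (n choose l)) + \<gamma> * (real l ^ 2 * real (n choose l))) / 2 ^ n)"
      by (intro sum.cong) auto
    also have "\<dots> = (\<alpha> * (\<Sum>l\<le>n. real (n choose l)) + \<beta> * (\<Sum>l\<le>n. real l * real (n choose l)) + \<gamma> * (\<Sum>l\<le>n. real l ^ 2 * real (n choose l))) / 2 ^ n"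
      by (simp only: sum_divide_distrib[symmetric] sum.distrib sum_distrib_left)
    finally show ?thesis .
  qed
  also have "\<dots> = \<alpha> + \<beta> * real n / 2 + \<gamma> * real n * (real n + 1) / 4"
    unfolding binom_sum0 binom_sum1 binom_sum2 by (simp add: add_divide_distrib)
  finally show ?thesis .
qed



definition aa :: "nat \<Rightarrow> nat \<Rightarrow> real" where
  "aa n l = sqrt (real (n choose l)) * (sqrt 2 / 2) ^ n"

lemma c_sq: "((sqrt 2 / 2) ^ n) * ((sqrt 2 / 2) ^ n) = (1 / 2 ^ n :: real)"
proof -
  have "((sqrt 2 / 2) ^ n) * ((sqrt 2 / 2) ^ n) = ((sqrt 2 / 2) * (sqrt 2 / 2)) ^ n"
    by (simp only: power_mult_distrib[symmetric])
  also have "(sqrt 2 / 2) * (sqrt 2 / 2) = (1/2 :: real)" by simp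
  finally show ?thesis by (simp add: power_divide)
qed

lemma aa_sq: "aa n l * aa n l = hh n l"
  unfolding aa_def hh_def using c_sq[of n]
  by (simp add: algebra_simps)

lemma binom_step: "real (Suc l) * real (n choose Suc l) = real (n - l) * real (n choose l)"
proof -
  have "Suc l * (n choose Suc l) = (n - l) * (n choose l)"
    using binomial_absorption[of l n] binomial_absorb_comp[of n l] by simp
  then show ?thesis by (metis of_nat_mult)
qed

lemma aa_pp1: "aa n l * aa n (Suc l) * pp n l = hh n l * real (n - l)"
proof -
  let ?c = "(sqrt 2 / 2) ^ n :: real"
  have "sqrt (real (n choose Suc l)) * pp n l
        = sqrt (real (n - l)) * sqrt (real (Suc l) * real (n choose Suc l))"
    unfolding pp_def by (simp add: real_sqrt_mult)
  also have "\<dots> = sqrt (real (n - l)) * (sqrt (real (n - l)) * sqrt (real (n choose l)))"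
    by (simp only: binom_step real_sqrt_mult)
  also have "\<dots> = real (n - l) * sqrt (real (n choose l))"
    by (simp add: mult.assoc[symmetric])
  finally have e: "sqrt (real (n choose Suc l)) * pp n l = real (n - l) * sqrt (real (n choose l))" .
  have "aa n l * aa n (Suc l) * pp n l = sqrt (real (n choose l)) * (sqrt (real (n choose Suc l)) * pp n l) * (?c * ?c)"
    unfolding aa_def by (simp only: mult_ac)
  also have "\<dots> = real (n choose l) * real (n - l) * (?c * ?c)"
    unfolding e by (simp add: mult.assoc[symmetric] mult.commute[of _ "real (n - l)"])
  also have "\<dots> = hh n l * real (n - l)"
    unfolding c_sq hh_def by simp
  finally show ?thesis .
qed

lemma aa_pp2: "pp n l * pp n l * (aa n (Suc l) * aa n (Suc l)) = hh n l * real (n - l) ^ 2"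
proof -
  have "pp n l * pp n l * (aa n (Suc l) * aa n (Suc l)) = real (n - l) * (real (Suc l) * real (n choose Suc l)) / 2 ^ n"
    unfolding pp_sq aa_sq hh_def by simp
  also have "\<dots> = hh n l * real (n - l) ^ 2"
    unfolding binom_step hh_def by (simp add: power2_eq_square)
  finally show ?thesis .
qed

lemma aa_pp3: "aa n l * aa n (Suc (Suc l)) * pp n l * pp n (Suc l) = hh n l * real (n - l) * (real n - real l - 1)"
proof (cases "Suc l \<le> n")
  case True
  have h1: "hh n (Suc l) \<noteq> 0" using True unfolding hh_def by simp
  have "(aa n l * aa n (Suc (Suc l)) * pp n l * pp n (Suc l)) * hh n (Suc l)
        = (aa n l * aa n (Suc l) * pp n l) * (aa n (Suc l) * aa n (Suc (Suc l)) * pp n (Suc l))"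
    unfolding aa_sq[symmetric] by (simp only: mult_ac)
  also have "\<dots> = (hh n l * real (n - l) * (real n - real l - 1)) * hh n (Suc l)"
    unfolding aa_pp1 using True by (simp add: of_nat_diff)
  finally show ?thesis using h1 by simp
next
  case False
  then have "pp n l = 0" "real (n - l) = 0" unfolding pp_def by auto
  then show ?thesis by simp
qed



definition uu :: "nat \<Rightarrow> real \<Rightarrow> nat \<Rightarrow> complex" where
  "uu n \<theta> l = cis (\<theta> * real l) * complex_of_real (aa n l)"
definition Vp :: "nat \<Rightarrow> real \<Rightarrow> nat \<Rightarrow> complex" where "Vp n \<theta> = mvec {0..n} (Splus n) (uu n \<theta>)"
definition Vm :: "nat \<Rightarrow> real \<Rightarrow> nat \<Rightarrow> complex" where "Vm n \<theta> = mvec {0..n} (Sminus n) (uu n \<theta>)"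
definition Vz :: "nat \<Rightarrow> real \<Rightarrow> nat \<Rightarrow> complex" where "Vz n \<theta> = mvec {0..n} (Sz n) (uu n \<theta>)"

lemma uu_pair: "cnj (uu n \<theta> j) * uu n \<theta> k = cis (\<theta> * (real k - real j)) * complex_of_real (aa n j * aa n k)"
  unfolding uu_def by (simp add: cis_cnj cis_mult algebra_simps)

lemma sum_idx_shift: fixes n :: nat and F :: "nat \<Rightarrow> 'a::comm_monoid_add" shows "(\<Sum>j\<in>{0..n}. F j) = F 0 + (\<Sum>l<n. F (Suc l))"
proof -
  have "{0..n} = {..<Suc n}" by auto
  then show ?thesis by (simp only: sum.lessThan_Suc_shift)
qed

lemma sum_idx_last: fixes n :: nat and F :: "nat \<Rightarrow> 'a::comm_monoid_add" shows "(\<Sum>j\<in>{0..n}. F j) = (\<Sum>l<n. F l) + F n"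
proof -
  have "{0..n} = {..<Suc n}" by auto
  then show ?thesis by (simp only: sum.lessThan_Suc)
qed

lemma hh_le:
  assumes "\<And>l. l \<le> n \<Longrightarrow> f l = hh n l * (\<alpha> + \<beta> * real l + \<gamma> * real l ^ 2)"
  shows "(\<Sum>l\<le>n. f l) = \<alpha> + \<beta> * real n / 2 + \<gamma> * real n * (real n + 1) / 4"
  using assms by (simp add: hh_poly[symmetric])

lemma hh_lt:
  assumes "\<And>l. l < n \<Longrightarrow> f l = hh n l * (\<alpha> + \<beta> * real l + \<gamma> * real l ^ 2)"
    and "\<alpha> + \<beta> * real n + \<gamma> * real n ^ 2 = 0"
  shows "(\<Sum>l<n. f l) = \<alpha> + \<beta> * real n / 2 + \<gamma> * real n * (real n + 1) / 4"
proof -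
  have "(\<Sum>l<n. f l) = (\<Sum>l<n. hh n l * (\<alpha> + \<beta> * real l + \<gamma> * real l ^ 2))"
    using assms(1) by (intro sum.cong) auto
  also have "\<dots> = (\<Sum>l<n. hh n l * (\<alpha> + \<beta> * real l + \<gamma> * real l ^ 2)) + hh n n * (\<alpha> + \<beta> * real n + \<gamma> * real n ^ 2)"
    using assms(2) by simp
  also have "\<dots> = (\<Sum>l\<le>n. hh n l * (\<alpha> + \<beta> * real l + \<gamma> * real l ^ 2))"
    by (simp add: lessThan_Suc_atMost[symmetric])
  finally show ?thesis by (simp only: hh_poly)
qed

lemma cinner_Sp_right: "cinner {0..n} w (mvec {0..n} (Splus n) v) = (\<Sum>l<n. cnj (w (Suc l)) * (complex_of_real (pp n l) * v l))"
  unfolding cinner_def mvec_Splus sum_idx_shift by (auto intro!: sum.cong)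

lemma cinner_Sm_right: "cinner {0..n} w (mvec {0..n} (Sminus n) v) = (\<Sum>l<n. cnj (w l) * (complex_of_real (pp n l) * v (Suc l)))"
  unfolding cinner_def mvec_Sminus sum_idx_last by (auto intro!: sum.cong)

lemma cinner_Sz_right: "cinner {0..n} w (mvec {0..n} (Sz n) v) = (\<Sum>l\<le>n. cnj (w l) * (complex_of_real (spin_M n l) * v l))"
  unfolding cinner_def mvec_Sz by (subst atLeast0AtMost) (auto intro!: sum.cong)

lemma cinner_swap: "cinner I x y = cnj (cinner I y x)"
  unfolding cinner_def by (simp add: mult.commute)

lemma cinner_Sp_left: "cinner {0..n} (mvec {0..n} (Splus n) v) w = (\<Sum>l<n. cnj (complex_of_real (pp n l) * v l) * w (Suc l))"
  by (subst cinner_swap) (simp add: cinner_Sp_right mult.commute)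

lemma cinner_Sm_left: "cinner {0..n} (mvec {0..n} (Sminus n) v) w = (\<Sum>l<n. cnj (complex_of_real (pp n l) * v (Suc l)) * w l)"
  by (subst cinner_swap) (simp add: cinner_Sm_right mult.commute)

lemma cinner_Sz_left: "cinner {0..n} (mvec {0..n} (Sz n) v) w = (\<Sum>l\<le>n. cnj (complex_of_real (spin_M n l) * v l) * w l)"
  by (subst cinner_swap) (simp add: cinner_Sz_right mult.commute)

lemma P1: "cinner {0..n} (uu n \<theta>) (Vp n \<theta>) = cis (-\<theta>) * complex_of_real (real n / 2)"
proof -
  have "cinner {0..n} (uu n \<theta>) (Vp n \<theta>) = (\<Sum>l<n. cis (-\<theta>) * complex_of_real (aa n l * aa n (Suc l) * pp n l))"
    unfolding Vp_def cinner_Sp_right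
  proof (intro sum.cong refl)
    fix l
    have e: "cnj (uu n \<theta> (Suc l)) * uu n \<theta> l = cis (-\<theta>) * complex_of_real (aa n (Suc l) * aa n l)"
      by (simp add: uu_pair)
    show "cnj (uu n \<theta> (Suc l)) * (complex_of_real (pp n l) * uu n \<theta> l)
       = cis (-\<theta>) * complex_of_real (aa n l * aa n (Suc l) * pp n l)"
      using e by (simp add: algebra_simps)
  qed
  also have "\<dots> = cis (-\<theta>) * complex_of_real (\<Sum>l<n. aa n l * aa n (Suc l) * pp n l)"
    by (simp add: sum_distrib_left)
  also have "(\<Sum>l<n. aa n l * aa n (Suc l) * pp n l) = real n + (-1) * real n / 2 + 0 * real n * (real n + 1) / 4"
    by (rule hh_lt) (auto simp: aa_pp1 of_nat_diff)
  finally show ?thesis by simp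
qed

lemma uu_self: "cnj (uu n \<theta> l) * uu n \<theta> l = complex_of_real (hh n l)"
  by (simp add: uu_pair aa_sq)

lemma uu_next: "cnj (uu n \<theta> l) * uu n \<theta> (Suc l) = cis \<theta> * complex_of_real (aa n l * aa n (Suc l))"
  by (simp add: uu_pair)

lemma uu_prev: "cnj (uu n \<theta> (Suc l)) * uu n \<theta> l = cis (-\<theta>) * complex_of_real (aa n l * aa n (Suc l))"
proof -
  have "cnj (uu n \<theta> (Suc l)) * uu n \<theta> l = cis (\<theta> * (real l - real (Suc l))) * complex_of_real (aa n (Suc l) * aa n l)"
    by (rule uu_pair)
  also have "\<dots> = cis (-\<theta>) * complex_of_real (aa n l * aa n (Suc l))"
    by (simp only: mult.commute[of "aa n (Suc l)"]) simp
  finally show ?thesis .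
qed

lemma uu_next2: "cnj (uu n \<theta> l) * uu n \<theta> (Suc (Suc l)) = cis (2 * \<theta>) * complex_of_real (aa n l * aa n (Suc (Suc l)))"
  by (simp add: uu_pair algebra_simps)

lemma P2: "cinner {0..n} (uu n \<theta>) (Vm n \<theta>) = cis \<theta> * complex_of_real (real n / 2)"
proof -
  have "cinner {0..n} (uu n \<theta>) (Vm n \<theta>) = (\<Sum>l<n. cis \<theta> * complex_of_real (aa n l * aa n (Suc l) * pp n l))"
    unfolding Vm_def cinner_Sm_right
  proof (intro sum.cong refl)
    fix l
    show "cnj (uu n \<theta> l) * (complex_of_real (pp n l) * uu n \<theta> (Suc l))
       = cis \<theta> * complex_of_real (aa n l * aa n (Suc l) * pp n l)"
      using uu_next[of n \<theta> l] by (simp add: algebra_simps)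
  qed
  also have "\<dots> = cis \<theta> * complex_of_real (\<Sum>l<n. aa n l * aa n (Suc l) * pp n l)"
    by (simp add: sum_distrib_left)
  also have "(\<Sum>l<n. aa n l * aa n (Suc l) * pp n l) = real n + (-1) * real n / 2 + 0 * real n * (real n + 1) / 4"
    by (rule hh_lt) (auto simp: aa_pp1 of_nat_diff)
  finally show ?thesis by simp
qed

lemma P3: "cinner {0..n} (uu n \<theta>) (Vz n \<theta>) = 0"
proof -
  have "cinner {0..n} (uu n \<theta>) (Vz n \<theta>) = (\<Sum>l\<le>n. complex_of_real (hh n l * spin_M n l))"
    unfolding Vz_def cinner_Sz_right
  proof (intro sum.cong refl)
    fix l
    show "cnj (uu n \<theta> l) * (complex_of_real (spin_M n l) * uu n \<theta> l) = complex_of_real (hh n l * spin_M n l)"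
      using uu_self[of n \<theta> l] by (simp add: algebra_simps)
  qed
  also have "\<dots> = complex_of_real (\<Sum>l\<le>n. hh n l * spin_M n l)" by simp
  also have "(\<Sum>l\<le>n. hh n l * spin_M n l) = (- real n / 2) + 1 * real n / 2 + 0 * real n * (real n + 1) / 4"
    by (rule hh_le) (simp add: spin_M_def)
  finally show ?thesis by simp
qed

lemma Vp_Suc: "l < n \<Longrightarrow> Vp n \<theta> (Suc l) = complex_of_real (pp n l) * uu n \<theta> l"
  unfolding Vp_def mvec_Splus by simp

lemma Vm_at: "Vm n \<theta> l = (if l < n then complex_of_real (pp n l) * uu n \<theta> (Suc l) else 0)"
  unfolding Vm_def mvec_Sminus ..

lemma Vz_at: "l \<le> n \<Longrightarrow> Vz n \<theta> l = complex_of_real (spin_M n l) * uu n \<theta> l"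
  unfolding Vz_def mvec_Sz by simp

lemma P4: "cinner {0..n} (Vp n \<theta>) (Vp n \<theta>) = complex_of_real ((real n ^ 2 + real n) / 4)"
proof -
  have "cinner {0..n} (Vp n \<theta>) (Vp n \<theta>) = (\<Sum>l<n. complex_of_real (pp n l * pp n l * hh n l))"
    unfolding Vp_def[of n \<theta>] cinner_Sp_left unfolding Vp_def[symmetric]
  proof (intro sum.cong refl)
    fix l assume "l \<in> {..<n}"
    then show "cnj (complex_of_real (pp n l) * uu n \<theta> l) * Vp n \<theta> (Suc l) = complex_of_real (pp n l * pp n l * hh n l)"
      using uu_self[of n \<theta> l] by (simp add: Vp_Suc algebra_simps)
  qed
  also have "\<dots> = complex_of_real (\<Sum>l<n. pp n l * pp n l * hh n l)" by simp
  also have "(\<Sum>l<n. pp n l * pp n l * hh n l) = real n + (real n - 1) * real n / 2 + (-1) * real n * (real n + 1) / 4"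
    by (rule hh_lt) (auto simp: pp_sq of_nat_diff algebra_simps power2_eq_square)
  finally have X: "cinner {0..n} (Vp n \<theta>) (Vp n \<theta>) = complex_of_real (real n + (real n - 1) * real n / 2 + (-1) * real n * (real n + 1) / 4)" .
  have "real n + (real n - 1) * real n / 2 + (-1) * real n * (real n + 1) / 4 = (real n ^ 2 + real n) / 4"
    by (simp add: field_simps power2_eq_square)
  then show ?thesis by (simp only: X)
qed

lemma P5: "cinner {0..n} (Vm n \<theta>) (Vm n \<theta>) = complex_of_real ((real n ^ 2 + real n) / 4)"
proof -
  have "cinner {0..n} (Vm n \<theta>) (Vm n \<theta>) = (\<Sum>l<n. complex_of_real (pp n l * pp n l * (aa n (Suc l) * aa n (Suc l))))"
    unfolding Vm_def[of n \<theta>] cinner_Sm_left unfolding Vm_def[symmetric]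
  proof (intro sum.cong refl)
    fix l assume "l \<in> {..<n}"
    then show "cnj (complex_of_real (pp n l) * uu n \<theta> (Suc l)) * Vm n \<theta> l = complex_of_real (pp n l * pp n l * (aa n (Suc l) * aa n (Suc l)))"
      using uu_self[of n \<theta> "Suc l"] by (simp add: Vm_at aa_sq algebra_simps)
  qed
  also have "\<dots> = complex_of_real (\<Sum>l<n. pp n l * pp n l * (aa n (Suc l) * aa n (Suc l)))" by simp
  also have "(\<Sum>l<n. pp n l * pp n l * (aa n (Suc l) * aa n (Suc l))) = real n ^ 2 + (- 2 * real n) * real n / 2 + 1 * real n * (real n + 1) / 4"
    by (rule hh_lt) (simp_all only: aa_pp2, auto simp: of_nat_diff algebra_simps power2_eq_square)
  finally have X: "cinner {0..n} (Vm n \<theta>) (Vm n \<theta>) = complex_of_real (real n ^ 2 + (- 2 * real n) * real n / 2 + 1 * real n * (real n + 1) / 4)" .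
  have "real n ^ 2 + (- 2 * real n) * real n / 2 + 1 * real n * (real n + 1) / 4 = (real n ^ 2 + real n) / 4"
    by (simp add: field_simps power2_eq_square)
  then show ?thesis by (simp only: X)
qed

lemma P6: "cinner {0..n} (Vp n \<theta>) (Vm n \<theta>) = cis (2 * \<theta>) * complex_of_real ((real n ^ 2 - real n) / 4)"
proof -
  have "cinner {0..n} (Vp n \<theta>) (Vm n \<theta>) = (\<Sum>l<n. cis (2 * \<theta>) * complex_of_real (hh n l * real (n - l) * (real n - real l - 1)))"
    unfolding Vp_def[of n \<theta>] cinner_Sp_left
  proof (intro sum.cong refl)
    fix l assume l: "l \<in> {..<n}"
    show "cnj (complex_of_real (pp n l) * uu n \<theta> l) * Vm n \<theta> (Suc l) =
          cis (2 * \<theta>) * complex_of_real (hh n l * real (n - l) * (real n - real l - 1))"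
    proof (cases "Suc l < n")
      case True
      have "cnj (complex_of_real (pp n l) * uu n \<theta> l) * Vm n \<theta> (Suc l)
          = cis (2 * \<theta>) * complex_of_real (aa n l * aa n (Suc (Suc l)) * pp n l * pp n (Suc l))"
        using True uu_next2[of n \<theta> l] by (simp add: Vm_at algebra_simps)
      then show ?thesis by (simp only: aa_pp3)
    next
      case False
      then have "Suc l = n" using l by simp
      then have z: "real n - real l - 1 = 0" by auto
      show ?thesis using False by (simp only: Vm_at z if_False) simp
    qed
  qed
  also have "\<dots> = cis (2 * \<theta>) * complex_of_real (\<Sum>l<n. hh n l * real (n - l) * (real n - real l - 1))"
    by (simp add: sum_distrib_left)
  also have "(\<Sum>l<n. hh n l * real (n - l) * (real n - real l - 1)) = (real n ^ 2 - real n) + (1 - 2 * real n) * real n / 2 + 1 * real n * (real n + 1) / 4"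
    by (rule hh_lt) (auto simp: of_nat_diff algebra_simps power2_eq_square)
  also have "(real n ^ 2 - real n) + (1 - 2 * real n) * real n / 2 + 1 * real n * (real n + 1) / 4 = (real n ^ 2 - real n) / 4"
    by (simp add: field_simps power2_eq_square)
  finally show ?thesis .
qed

lemma P7: "cinner {0..n} (Vm n \<theta>) (Vp n \<theta>) = cis (- (2 * \<theta>)) * complex_of_real ((real n ^ 2 - real n) / 4)"
  by (subst cinner_swap) (simp add: P6 cis_cnj)

lemma P8: "cinner {0..n} (Vp n \<theta>) (Vz n \<theta>) = cis \<theta> * complex_of_real (real n / 4)"
proof -
  have "cinner {0..n} (Vp n \<theta>) (Vz n \<theta>) = (\<Sum>l<n. cis \<theta> * complex_of_real (aa n l * aa n (Suc l) * pp n l * spin_M n (Suc l)))"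
    unfolding Vp_def[of n \<theta>] cinner_Sp_left
  proof (intro sum.cong refl)
    fix l assume l: "l \<in> {..<n}"
    then show "cnj (complex_of_real (pp n l) * uu n \<theta> l) * Vz n \<theta> (Suc l) =
          cis \<theta> * complex_of_real (aa n l * aa n (Suc l) * pp n l * spin_M n (Suc l))"
      using uu_next[of n \<theta> l] by (simp add: Vz_at algebra_simps)
  qed
  also have "\<dots> = cis \<theta> * complex_of_real (\<Sum>l<n. aa n l * aa n (Suc l) * pp n l * spin_M n (Suc l))"
    by (simp add: sum_distrib_left)
  also have "(\<Sum>l<n. aa n l * aa n (Suc l) * pp n l * spin_M n (Suc l)) = (real n - real n ^ 2 / 2) + (3 * real n / 2 - 1) * real n / 2 + (-1) * real n * (real n + 1) / 4"
    by (rule hh_lt) (simp_all only: aa_pp1, auto simp: of_nat_diff algebra_simps power2_eq_square spin_M_def)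
  also have "(real n - real n ^ 2 / 2) + (3 * real n / 2 - 1) * real n / 2 + (-1) * real n * (real n + 1) / 4 = real n / 4"
    by (simp add: field_simps power2_eq_square)
  finally show ?thesis .
qed

lemma P9: "cinner {0..n} (Vm n \<theta>) (Vz n \<theta>) = cis (-\<theta>) * complex_of_real (- real n / 4)"
proof -
  have "cinner {0..n} (Vm n \<theta>) (Vz n \<theta>) = (\<Sum>l<n. cis (-\<theta>) * complex_of_real (aa n l * aa n (Suc l) * pp n l * spin_M n l))"
    unfolding Vm_def[of n \<theta>] cinner_Sm_left
  proof (intro sum.cong refl)
    fix l assume l: "l \<in> {..<n}"
    then show "cnj (complex_of_real (pp n l) * uu n \<theta> (Suc l)) * Vz n \<theta> l =
          cis (-\<theta>) * complex_of_real (aa n l * aa n (Suc l) * pp n l * spin_M n l)"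
      using uu_prev[of n \<theta> l] by (simp add: Vz_at algebra_simps)
  qed
  also have "\<dots> = cis (-\<theta>) * complex_of_real (\<Sum>l<n. aa n l * aa n (Suc l) * pp n l * spin_M n l)"
    by (simp add: sum_distrib_left)
  also have "(\<Sum>l<n. aa n l * aa n (Suc l) * pp n l * spin_M n l) = (- (real n ^ 2) / 2) + (3 * real n / 2) * real n / 2 + (-1) * real n * (real n + 1) / 4"
    by (rule hh_lt) (simp_all only: aa_pp1, auto simp: of_nat_diff algebra_simps power2_eq_square spin_M_def)
  also have "(- (real n ^ 2) / 2) + (3 * real n / 2) * real n / 2 + (-1) * real n * (real n + 1) / 4 = - real n / 4"
    by (simp add: field_simps power2_eq_square)
  finally show ?thesis .
qed

lemma P10: "cinner {0..n} (Vz n \<theta>) (Vz n \<theta>) = complex_of_real (real n / 4)"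
proof -
  have "cinner {0..n} (Vz n \<theta>) (Vz n \<theta>) = (\<Sum>l\<le>n. complex_of_real (hh n l * spin_M n l ^ 2))"
    unfolding Vz_def[of n \<theta>] cinner_Sz_left unfolding Vz_def[symmetric]
  proof (intro sum.cong refl)
    fix l assume "l \<in> {..n}"
    then show "cnj (complex_of_real (spin_M n l) * uu n \<theta> l) * Vz n \<theta> l = complex_of_real (hh n l * spin_M n l ^ 2)"
      using uu_self[of n \<theta> l] by (simp add: Vz_at algebra_simps power2_eq_square)
  qed
  also have "\<dots> = complex_of_real (\<Sum>l\<le>n. hh n l * spin_M n l ^ 2)" by simp
  also have "(\<Sum>l\<le>n. hh n l * spin_M n l ^ 2) = real n ^ 2 / 4 + (- real n) * real n / 2 + 1 * real n * (real n + 1) / 4"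
    by (rule hh_le) (simp add: spin_M_def algebra_simps power2_eq_square)
  also have "real n ^ 2 / 4 + (- real n) * real n / 2 + 1 * real n * (real n + 1) / 4 = real n / 4"
    by (simp add: field_simps power2_eq_square)
  finally show ?thesis .
qed



lemma cinner_add_left: "cinner I (\<lambda>j. x j + y j) z = cinner I x z + cinner I y z"
  unfolding cinner_def by (simp add: distrib_right sum.distrib)
lemma cinner_add_right: "cinner I z (\<lambda>j. x j + y j) = cinner I z x + cinner I z y"
  unfolding cinner_def by (simp add: distrib_left sum.distrib)
lemma cinner_scale_left: "cinner I (\<lambda>j. c * x j) z = cnj c * cinner I x z"
  unfolding cinner_def by (simp add: sum_distrib_left mult.assoc)
lemma cinner_scale_right: "cinner I z (\<lambda>j. c * x j) = c * cinner I z x"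
  unfolding cinner_def by (simp add: sum_distrib_left mult_ac)

definition lin3 :: "nat \<Rightarrow> real \<Rightarrow> complex \<Rightarrow> complex \<Rightarrow> complex \<Rightarrow> nat \<Rightarrow> complex" where
  "lin3 n \<theta> a b c = (\<lambda>j. (a * Vp n \<theta> j + b * Vm n \<theta> j) + c * Vz n \<theta> j)"

lemma R_lin3: "cinner {0..n} (uu n \<theta>) (lin3 n \<theta> a b c)
   = a * (cis (-\<theta>) * complex_of_real (real n / 2)) + b * (cis \<theta> * complex_of_real (real n / 2))"
  unfolding lin3_def cinner_add_right cinner_scale_right P1 P2 P3 by simp

lemma Q_lin3: "cinner {0..n} (lin3 n \<theta> a b c) (lin3 n \<theta> a b c)
   = cnj a * (a * complex_of_real ((real n ^ 2 + real n) / 4) + b * (cis (2 * \<theta>) * complex_of_real ((real n ^ 2 - real n) / 4)) + c * (cis \<theta> * complex_of_real (real n / 4)))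
   + cnj b * (a * (cis (- (2 * \<theta>)) * complex_of_real ((real n ^ 2 - real n) / 4)) + b * complex_of_real ((real n ^ 2 + real n) / 4) + c * (cis (-\<theta>) * complex_of_real (- real n / 4)))
   + cnj c * (a * cnj (cis \<theta> * complex_of_real (real n / 4)) + b * cnj (cis (-\<theta>) * complex_of_real (- real n / 4)) + c * complex_of_real (real n / 4))"
proof -
  have a: "cinner {0..n} (Vz n \<theta>) (Vp n \<theta>) = cnj (cis \<theta> * complex_of_real (real n / 4))"
    by (subst cinner_swap) (simp only: P8)
  have b: "cinner {0..n} (Vz n \<theta>) (Vm n \<theta>) = cnj (cis (-\<theta>) * complex_of_real (- real n / 4))"
    by (subst cinner_swap) (simp only: P9)
  show ?thesis
    unfolding lin3_def cinner_add_right cinner_scale_right cinner_add_left cinner_scale_left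
      P4 P5 P6 P7 P8 P9 P10 a b by (simp add: algebra_simps)
qed

lemma cis_expand: "cis t = complex_of_real (cos t) + \<i> * complex_of_real (sin t)"
  by (simp add: complex_eq_iff)

lemma RQ_x:
  "cinner {0..n} (uu n \<theta>) (lin3 n \<theta> (1/2) (1/2) 0) = complex_of_real (real n / 2 * cos \<theta>)"
  "cinner {0..n} (lin3 n \<theta> (1/2) (1/2) 0) (lin3 n \<theta> (1/2) (1/2) 0)
     = complex_of_real ((real n ^ 2 + real n) / 8 + (real n ^ 2 - real n) / 8 * cos (2 * \<theta>))"
   apply (simp only: R_lin3 cis_expand)
   apply (simp add: complex_eq_iff algebra_simps)
  apply (simp only: Q_lin3 cis_expand)
  apply (simp add: complex_eq_iff algebra_simps power2_eq_square)
  apply (simp add: field_simps)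
  done

lemma RQ_w:
  "cinner {0..n} (uu n \<theta>) (lin3 n \<theta> (-\<i>/2) (\<i>/2) 1) = complex_of_real (- (real n / 2 * sin \<theta>))"
  "cinner {0..n} (lin3 n \<theta> (-\<i>/2) (\<i>/2) 1) (lin3 n \<theta> (-\<i>/2) (\<i>/2) 1)
     = complex_of_real ((real n ^ 2 + real n) / 8 - (real n ^ 2 - real n) / 8 * cos (2 * \<theta>) + real n / 4)"
   apply (simp only: R_lin3 cis_expand)
   apply (simp add: complex_eq_iff algebra_simps)
  apply (simp only: Q_lin3 cis_expand)
  apply (simp add: complex_eq_iff algebra_simps power2_eq_square)
  apply (simp add: field_simps)
  done



lemma div_2i: "x / (2 * \<i>) = - (\<i> * x) / 2" "x / (\<i> * 2) = - (\<i> * x) / 2"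
  by (simp_all add: field_simps)

lemma SPhi_phase: "SPhi n \<Phi> i j = cis (- \<Phi> * (real i - real j)) * Sx n i j"
proof (cases "i = Suc j")
  case True
  then show ?thesis unfolding SPhi_def Sx_def Sy_def Splus_eq Sminus_eq div_2i
    by (simp add: cis_expand complex_eq_iff field_simps)
next
  case False
  show ?thesis
  proof (cases "j = Suc i")
    case True
    then show ?thesis unfolding SPhi_def Sx_def Sy_def Splus_eq Sminus_eq div_2i
      by (simp add: cis_expand complex_eq_iff field_simps)
  next
    case F2: False
    then show ?thesis using False unfolding SPhi_def Sx_def Sy_def Splus_eq Sminus_eq by simp
  qed
qed

lemma mpow_phase:
  assumes "\<And>i j. X i j = cis (- \<Phi> * (real i - real j)) * Y i j"
  shows "mpow I X k i j = cis (- \<Phi> * (real i - real j)) * mpow I Y k i j"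
proof (induction k arbitrary: i)
  case 0
  then show ?case by (simp add: mid_def)
next
  case (Suc k)
  have "mpow I X (Suc k) i j = (\<Sum>l\<in>I. cis (- \<Phi> * (real i - real j)) * (Y i l * mpow I Y k l j))"
  proof (simp only: mpow.simps mmul_def, intro sum.cong refl)
    fix l
    have c: "cis (- \<Phi> * (real i - real l)) * cis (- \<Phi> * (real l - real j)) = cis (- \<Phi> * (real i - real j))"
      by (simp add: cis_mult algebra_simps)
    have "X i l * mpow I X k l j = (cis (- \<Phi> * (real i - real l)) * cis (- \<Phi> * (real l - real j))) * (Y i l * mpow I Y k l j)"
      by (simp only: assms Suc.IH mult_ac)
    then show "X i l * mpow I X k l j = cis (- \<Phi> * (real i - real j)) * (Y i l * mpow I Y k l j)"
      by (simp only: c)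
  qed
  also have "\<dots> = cis (- \<Phi> * (real i - real j)) * mpow I Y (Suc k) i j"
    by (simp add: mmul_def sum_distrib_left)
  finally show ?case .
qed

lemma mscale_AX: "mscale (\<i> * complex_of_real \<gamma>) (Sx n) = mscale (complex_of_real \<gamma>) (AX n)"
  unfolding mscale_def AX_def by (auto intro!: ext)

lemma mexp_phase:
  assumes "i \<in> {0..n}"
  shows "mexp {0..n} (mscale (\<i> * complex_of_real \<gamma>) (SPhi n \<Phi>)) i j
       = cis (- \<Phi> * (real i - real j)) * EE n (complex_of_real \<gamma>) i j"
proof -
  let ?z = "complex_of_real \<gamma>"
  have ph: "\<And>i j. mscale (\<i> * ?z) (SPhi n \<Phi>) i j = cis (- \<Phi> * (real i - real j)) * mscale (\<i> * ?z) (Sx n) i j"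
    unfolding mscale_def SPhi_phase by (simp add: mult_ac)
  have s0: "summable (\<lambda>k. ecoef {0..n} (AX n) i j k * ?z ^ k)"
    using ecoef_summable[of "{0..n}" i "AX n" j ?z] assms by simp
  have "(\<lambda>k. mpow {0..n} (mscale ?z (AX n)) k i j / of_nat (fact k)) = (\<lambda>k. ecoef {0..n} (AX n) i j k * ?z ^ k)"
    by (simp only: mpow_scale) (simp add: mscale_def ecoef_def mult_ac)
  then have s: "summable (\<lambda>k. mpow {0..n} (mscale ?z (AX n)) k i j / of_nat (fact k))"
    using s0 by simp
  have "mexp {0..n} (mscale (\<i> * ?z) (SPhi n \<Phi>)) i j
       = (\<Sum>k. cis (- \<Phi> * (real i - real j)) * (mpow {0..n} (mscale ?z (AX n)) k i j / of_nat (fact k)))"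
    unfolding mexp_def mpow_phase[OF ph] mscale_AX by simp
  also have "\<dots> = cis (- \<Phi> * (real i - real j)) * EE n ?z i j"
    unfolding EE_def mexp_def using s by (rule suminf_mult)
  finally show ?thesis .
qed

lemma mpow_diag:
  assumes "finite I" "i \<in> I" "\<And>i j. i \<in> I \<Longrightarrow> D i j = (if i = j then d i else 0)"
  shows "mpow I D k i j = (if i = j then d i ^ k else 0)"
proof (induction k)
  case 0
  then show ?case by (simp add: mid_def)
next
  case (Suc k)
  have "mpow I D (Suc k) i j = (\<Sum>l\<in>I. if l = i then d i * mpow I D k i j else 0)"
    unfolding mpow.simps mmul_def using assms(3)[OF assms(2)] by (intro sum.cong) auto
  also have "\<dots> = d i * mpow I D k i j" using assms(1,2) by simp
  finally show ?case using Suc.IH by simp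
qed

lemma exp_series_div: "(\<lambda>k. x ^ k / of_nat (fact k)) sums exp (x::complex)"
proof -
  have "(\<lambda>k. x ^ k /\<^sub>R fact k) = (\<lambda>k. x ^ k / of_nat (fact k))"
    by (auto intro!: ext simp: scaleR_conv_of_real divide_inverse mult.commute)
  then show ?thesis using exp_converges[of x] by simp
qed

lemma mexp_diag:
  assumes "finite I" "i \<in> I" "\<And>i j. i \<in> I \<Longrightarrow> D i j = (if i = j then d i else 0)"
  shows "mexp I D i j = (if i = j then exp (d i) else 0)"
proof -
  have e: "\<And>k. mpow I D k i j = (if i = j then d i ^ k else 0)" by (rule mpow_diag[OF assms])
  show ?thesis unfolding mexp_def e
    using sums_unique[OF exp_series_div[of "d i"]] by auto
qed

lemma coherent_half: "l \<le> n \<Longrightarrow> coherent n (pi/2) 0 l = complex_of_real (aa n l)"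
proof -
  assume l: "l \<le> n"
  have c: "cos (pi / 2 / 2) = sqrt 2 / 2" "sin (pi / 2 / 2) = sqrt 2 / 2"
    by (simp_all add: cos_45 sin_45)
  have "(sqrt 2 / 2) ^ l * (sqrt 2 / 2) ^ (n - l) = (sqrt 2 / 2 :: real) ^ n"
    using l by (simp add: power_add[symmetric])
  then show ?thesis using l unfolding coherent_def aa_def c by (simp add: mult.assoc)
qed

lemma mvec_tensor_mid:
  assumes "k \<le> m"
  shows "mvec (two_idx n m) (tensor X mid) v (j, k) = (\<Sum>l\<in>{0..n}. X j l * v (l, k))"
proof -
  have "mvec (two_idx n m) (tensor X mid) v (j, k) = (\<Sum>l\<in>{0..n}. \<Sum>p\<in>{0..m}. X j l * mid k p * v (l, p))"
    unfolding mvec_def two_idx_def spin_idx_def tensor_def sum.cartesian_product by (simp add: case_prod_beta)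
  also have "\<dots> = (\<Sum>l\<in>{0..n}. X j l * v (l, k))"
  proof (intro sum.cong refl)
    fix l
    have e: "(\<lambda>p. X j l * mid k p * v (l, p)) = (\<lambda>p. if p = k then X j l * v (l, p) else 0)"
      by (auto simp: mid_def)
    show "(\<Sum>p\<in>{0..m}. X j l * mid k p * v (l, p)) = X j l * v (l, k)"
      unfolding e using assms by simp
  qed
  finally show ?thesis .
qed



lemma ZZ_diag:
  assumes "i \<in> two_idx n m"
  shows "mscale (\<i> * complex_of_real c) (tensor (Sz n) (Sz m)) i i'
       = (if i = i' then \<i> * complex_of_real (c * spin_M n (fst i) * spin_M m (snd i)) else 0)"
  using assms unfolding mscale_def tensor_def Sz_def two_idx_def spin_idx_def
  by (cases i; cases i') auto

lemma U_diag:
  assumes "i \<in> two_idx n m"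
  shows "mexp (two_idx n m) (mscale (\<i> * complex_of_real c) (tensor (Sz n) (Sz m))) i i'
       = (if i = i' then cis (c * spin_M n (fst i) * spin_M m (snd i)) else 0)"
proof -
  have fin: "finite (two_idx n m)" unfolding two_idx_def spin_idx_def by simp
  show ?thesis
    by (subst mexp_diag[OF fin assms, where d="\<lambda>i. \<i> * complex_of_real (c * spin_M n (fst i) * spin_M m (snd i))"])
       (auto simp: ZZ_diag cis_conv_exp mult.commute)
qed

lemma mvec_U:
  assumes "i \<in> two_idx n m"
  shows "mvec (two_idx n m) (mexp (two_idx n m) (mscale (\<i> * complex_of_real c) (tensor (Sz n) (Sz m)))) w i
       = cis (c * spin_M n (fst i) * spin_M m (snd i)) * w i"
proof -
  have fin: "finite (two_idx n m)" unfolding two_idx_def spin_idx_def by simp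
  have "mvec (two_idx n m) (mexp (two_idx n m) (mscale (\<i> * complex_of_real c) (tensor (Sz n) (Sz m)))) w i
      = (\<Sum>i'\<in>two_idx n m. if i' = i then cis (c * spin_M n (fst i) * spin_M m (snd i)) * w i else 0)"
    unfolding mvec_def U_diag[OF assms] by (intro sum.cong) auto
  also have "\<dots> = cis (c * spin_M n (fst i) * spin_M m (snd i)) * w i" using fin assms by simp
  finally show ?thesis .
qed

lemma SRU2_eq:
  assumes j: "j \<le> n" and k: "k \<le> m"
  shows "SRU2 n m \<gamma> \<Phi> \<mu> (j, k) = complex_of_real (aa m k) *
     (\<Sum>l\<in>{0..n}. EE n (complex_of_real \<gamma>) j l * complex_of_real (aa n l) *
        cis ((\<Phi> + \<mu> * spin_M m k) * (real l - real j)))"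
proof -
  have neg: "- \<i> * complex_of_real \<mu> = \<i> * complex_of_real (- \<mu>)" by simp
  have jk: "(j, k) \<in> two_idx n m" using j k unfolding two_idx_def spin_idx_def by simp
  have lk: "\<And>l. l \<in> {0..n} \<Longrightarrow> (l, k) \<in> two_idx n m" using k unfolding two_idx_def spin_idx_def by simp
  have "SRU2 n m \<gamma> \<Phi> \<mu> (j, k) = cis (- \<mu> * spin_M n j * spin_M m k) *
     (\<Sum>l\<in>{0..n}. (cis (- \<Phi> * (real j - real l)) * EE n (complex_of_real \<gamma>) j l) *
         (cis (\<mu> * spin_M n l * spin_M m k) * (coherent n (pi/2) 0 l * coherent m (pi/2) 0 k)))"
    unfolding SRU2_def Let_def neg mvec_U[OF jk]
    apply (simp only: fst_conv snd_conv spin_idx_def mvec_tensor_mid[OF k])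
    apply (intro arg_cong2[where f="(*)"] refl sum.cong)
    apply (subst mexp_phase)
      apply (simp add: j)
     apply (rule refl)
    apply (subst mvec_U[OF lk], assumption)
    apply simp
    done
  also have "\<dots> = complex_of_real (aa m k) *
     (\<Sum>l\<in>{0..n}. EE n (complex_of_real \<gamma>) j l * complex_of_real (aa n l) *
        cis ((\<Phi> + \<mu> * spin_M m k) * (real l - real j)))"
  proof -
    have "cis (- \<mu> * spin_M n j * spin_M m k) *
         ((cis (- \<Phi> * (real j - real l)) * EE n (complex_of_real \<gamma>) j l) *
         (cis (\<mu> * spin_M n l * spin_M m k) * (coherent n (pi/2) 0 l * coherent m (pi/2) 0 k)))
       = complex_of_real (aa m k) * (EE n (complex_of_real \<gamma>) j l * complex_of_real (aa n l) *
        cis ((\<Phi> + \<mu> * spin_M m k) * (real l - real j)))" if l: "l \<in> {0..n}" for l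
    proof -
      have c: "cis (- \<mu> * spin_M n j * spin_M m k) * cis (- \<Phi> * (real j - real l)) * cis (\<mu> * spin_M n l * spin_M m k)
            = cis ((\<Phi> + \<mu> * spin_M m k) * (real l - real j))"
        unfolding cis_mult by (rule arg_cong[where f=cis]) (simp add: spin_M_def field_simps)
      show ?thesis using l k c by (simp add: coherent_half mult_ac)
    qed
    note pt = this
    show ?thesis unfolding sum_distrib_left by (rule sum.cong[OF refl]) (rule pt)
  qed
  finally show ?thesis .
qed



lemma cis_lin_deriv:
  "((\<lambda>x. cis ((x + c) * r)) has_vector_derivative (\<i> * complex_of_real r * cis ((t + c) * r))) (at t)"
proof -
  let ?f = "\<lambda>z::complex. exp (\<i> * (z + complex_of_real c) * complex_of_real r)"
  have d: "(?f has_field_derivative (\<i> * complex_of_real r * ?f (complex_of_real t))) (at (complex_of_real t))"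
    by (auto intro!: derivative_eq_intros simp: mult_ac)
  have e: "\<And>x. cis ((x + c) * r) = ?f (complex_of_real x)"
    by (simp add: cis_conv_exp mult_ac distrib_left distrib_right)
  show ?thesis unfolding e using has_vector_derivative_real_field[OF d] by simp
qed

lemma mvec_mmul: "finite I \<Longrightarrow> mvec I (mmul I A B) v = mvec I A (mvec I B v)"
  unfolding mvec_def mmul_def
  by (auto intro!: ext simp: sum_distrib_left sum_distrib_right mult.assoc intro: sum.swap)

lemma unitary_cinner:
  assumes fin: "finite I"
    and U: "\<And>l p. l \<in> I \<Longrightarrow> p \<in> I \<Longrightarrow> (\<Sum>j\<in>I. cnj (E j l) * E j p) = mid l p"
  shows "cinner I (mvec I E x) (mvec I E y) = cinner I x y"
proof -
  have "cinner I (mvec I E x) (mvec I E y) = (\<Sum>j\<in>I. \<Sum>l\<in>I. \<Sum>p\<in>I. cnj (E j l * x l) * (E j p * y p))"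
    unfolding cinner_def mvec_def by (simp only: cnj_sum sum_product)
  also have "\<dots> = (\<Sum>l\<in>I. \<Sum>j\<in>I. \<Sum>p\<in>I. cnj (E j l * x l) * (E j p * y p))"
    by (rule sum.swap)
  also have "\<dots> = (\<Sum>l\<in>I. \<Sum>p\<in>I. \<Sum>j\<in>I. cnj (E j l * x l) * (E j p * y p))"
    by (rule sum.cong[OF refl], rule sum.swap)
  also have "\<dots> = (\<Sum>l\<in>I. \<Sum>p\<in>I. cnj (x l) * y p * (\<Sum>j\<in>I. cnj (E j l) * E j p))"
    by (intro sum.cong refl) (simp add: sum_distrib_left mult_ac)
  also have "\<dots> = (\<Sum>l\<in>I. \<Sum>p\<in>I. if p = l then cnj (x l) * y l else 0)"
    using U by (intro sum.cong refl) (auto simp: mid_def)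
  also have "\<dots> = cinner I x y" unfolding cinner_def using fin by simp
  finally show ?thesis .
qed

lemma cinner_assemble:
  assumes U: "\<And>l p. l \<in> {0..n} \<Longrightarrow> p \<in> {0..n} \<Longrightarrow> (\<Sum>j\<in>{0..n}. cnj (E j l) * E j p) = mid l p"
    and f: "\<And>j k. j \<le> n \<Longrightarrow> k \<le> m \<Longrightarrow> f (j, k) = complex_of_real (b k) * cis (ph k j) * mvec {0..n} E (x k) j"
    and g: "\<And>j k. j \<le> n \<Longrightarrow> k \<le> m \<Longrightarrow> g (j, k) = complex_of_real (b k) * cis (ph k j) * mvec {0..n} E (y k) j"
  shows "cinner (two_idx n m) f g = (\<Sum>k\<in>{0..m}. complex_of_real (b k ^ 2) * cinner {0..n} (x k) (y k))"
proof -
  have "cinner (two_idx n m) f g = (\<Sum>j\<in>{0..n}. \<Sum>k\<in>{0..m}. cnj (f (j, k)) * g (j, k))"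
    unfolding cinner_def two_idx_def spin_idx_def sum.cartesian_product by (simp add: case_prod_beta)
  also have "\<dots> = (\<Sum>k\<in>{0..m}. \<Sum>j\<in>{0..n}. complex_of_real (b k ^ 2) * (cnj (mvec {0..n} E (x k) j) * mvec {0..n} E (y k) j))"
  proof (subst sum.swap, intro sum.cong refl)
    fix k j assume k: "k \<in> {0..m}" and j: "j \<in> {0..n}"
    have c: "cnj (cis (ph k j)) * cis (ph k j) = 1" by (simp add: cis_cnj cis_mult)
    have "cnj (f (j, k)) * g (j, k) = complex_of_real (b k ^ 2) * (cnj (cis (ph k j)) * cis (ph k j)) *
            (cnj (mvec {0..n} E (x k) j) * mvec {0..n} E (y k) j)"
      using j k by (simp add: f g power2_eq_square mult_ac)
    then show "cnj (f (j, k)) * g (j, k) = complex_of_real (b k ^ 2) * (cnj (mvec {0..n} E (x k) j) * mvec {0..n} E (y k) j)"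
      by (simp only: c mult_1_right)
  qed
  also have "\<dots> = (\<Sum>k\<in>{0..m}. complex_of_real (b k ^ 2) * cinner {0..n} (mvec {0..n} E (x k)) (mvec {0..n} E (y k)))"
    unfolding cinner_def by (simp add: sum_distrib_left)
  also have "\<dots> = (\<Sum>k\<in>{0..m}. complex_of_real (b k ^ 2) * cinner {0..n} (x k) (y k))"
    using unitary_cinner[of "{0..n}" E, OF _ U] by simp
  finally show ?thesis .
qed

lemma qfi_eval:
  assumes "\<And>i. i \<in> I \<Longrightarrow> ((\<lambda>s. \<psi> s i) has_vector_derivative d\<psi> i) (at t)"
  shows "qfi I \<psi> t = 4 * (Re (cinner I d\<psi> d\<psi>) - (cmod (cinner I (\<psi> t) d\<psi>))\<^sup>2)"
proof -
  have "\<And>i. i \<in> I \<Longrightarrow> vector_derivative (\<lambda>s. \<psi> s i) (at t) = d\<psi> i"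
    using assms by (rule vector_derivative_at)
  then have "cinner I (\<lambda>i. vector_derivative (\<lambda>s. \<psi> s i) (at t)) (\<lambda>i. vector_derivative (\<lambda>s. \<psi> s i) (at t)) = cinner I d\<psi> d\<psi>"
     "cinner I (\<psi> t) (\<lambda>i. vector_derivative (\<lambda>s. \<psi> s i) (at t)) = cinner I (\<psi> t) d\<psi>"
    unfolding cinner_def by (auto intro!: sum.cong)
  then show ?thesis unfolding qfi_def Let_def by simp
qed



abbreviation th :: "nat \<Rightarrow> real \<Rightarrow> real \<Rightarrow> nat \<Rightarrow> real" where
  "th m \<Phi> \<mu> k \<equiv> \<Phi> + \<mu> * spin_M m k"

lemma cis_shift: "cis (\<theta> * (real l - real j)) = cis (- \<theta> * real j) * cis (\<theta> * real l)"
  by (simp add: cis_mult algebra_simps)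

lemma sum_to_mvec:
  "(\<Sum>l\<in>{0..n}. X j l * complex_of_real (aa n l) * cis (\<theta> * (real l - real j)))
   = cis (- \<theta> * real j) * mvec {0..n} X (uu n \<theta>) j"
  unfolding mvec_def uu_def cis_shift by (simp add: sum_distrib_left mult_ac)

lemma psi_form:
  assumes "j \<le> n" "k \<le> m"
  shows "SRU2 n m \<gamma> \<Phi> \<mu> (j, k) = complex_of_real (aa m k) * cis (- th m \<Phi> \<mu> k * real j) *
     mvec {0..n} (EE n (complex_of_real \<gamma>)) (uu n (th m \<Phi> \<mu> k)) j"
  unfolding SRU2_eq[OF assms] sum_to_mvec by (simp add: mult.assoc)

lemma EE_deriv:
  assumes "j \<le> n" "l \<le> n"
  shows "((\<lambda>g. EE n (complex_of_real g) j l) has_vector_derivative mmul {0..n} (EE n (complex_of_real \<gamma>)) (AX n) j l) (at \<gamma>)"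
  unfolding EE_def
  by (rule has_vector_derivative_real_field, rule mexp_deriv_right) (use assms in auto)

lemma mvec_AX: "mvec {0..n} (AX n) v l = \<i> * mvec {0..n} (Sx n) v l"
  unfolding mvec_def AX_def mscale_def by (simp add: sum_distrib_left mult.assoc)

lemma Sx_lin3: "mvec {0..n} (Sx n) (uu n \<theta>) l = lin3 n \<theta> (1/2) (1/2) 0 l"
proof -
  have "mvec {0..n} (Sx n) (uu n \<theta>) l = (\<Sum>k\<in>{0..n}. 1/2 * (Splus n l k * uu n \<theta> k) + 1/2 * (Sminus n l k * uu n \<theta> k))"
    unfolding mvec_def Sx_def by (intro sum.cong refl) (simp add: algebra_simps)
  also have "\<dots> = lin3 n \<theta> (1/2) (1/2) 0 l"
    unfolding lin3_def Vp_def Vm_def mvec_def by (simp only: sum.distrib sum_distrib_left[symmetric]) simp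
  finally show ?thesis .
qed

lemma Sy_lin3: "mvec {0..n} (Sy n) (uu n \<theta>) l + Vz n \<theta> l = lin3 n \<theta> (-\<i>/2) (\<i>/2) 1 l"
proof -
  have "mvec {0..n} (Sy n) (uu n \<theta>) l = (\<Sum>k\<in>{0..n}. (-\<i>/2) * (Splus n l k * uu n \<theta> k) + (\<i>/2) * (Sminus n l k * uu n \<theta> k))"
    unfolding mvec_def Sy_def div_2i by (intro sum.cong refl) (simp add: field_simps)
  also have "\<dots> = (-\<i>/2) * Vp n \<theta> l + (\<i>/2) * Vm n \<theta> l"
    unfolding Vp_def Vm_def mvec_def by (simp only: sum.distrib sum_distrib_left[symmetric])
  finally show ?thesis unfolding lin3_def by simp
qed

lemma dgam:
  assumes j: "j \<le> n" and k: "k \<le> m"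
  shows "((\<lambda>g. SRU2 n m g \<Phi> \<mu> (j, k)) has_vector_derivative
      complex_of_real (aa m k) * cis (- th m \<Phi> \<mu> k * real j) *
      mvec {0..n} (EE n (complex_of_real \<gamma>)) (\<lambda>l. \<i> * lin3 n (th m \<Phi> \<mu> k) (1/2) (1/2) 0 l) j) (at \<gamma>)"
proof -
  let ?t = "th m \<Phi> \<mu> k"
  have "((\<lambda>g. complex_of_real (aa m k) * (\<Sum>l\<in>{0..n}. EE n (complex_of_real g) j l * complex_of_real (aa n l) * cis (?t * (real l - real j))))
      has_vector_derivative complex_of_real (aa m k) * (\<Sum>l\<in>{0..n}. mmul {0..n} (EE n (complex_of_real \<gamma>)) (AX n) j l * complex_of_real (aa n l) * cis (?t * (real l - real j)))) (at \<gamma>)"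
    by (intro has_vector_derivative_mult_right has_vector_derivative_sum has_vector_derivative_mult_left EE_deriv[OF j]) simp
  moreover have "(\<Sum>l\<in>{0..n}. mmul {0..n} (EE n (complex_of_real \<gamma>)) (AX n) j l * complex_of_real (aa n l) * cis (?t * (real l - real j)))
      = cis (- ?t * real j) * mvec {0..n} (EE n (complex_of_real \<gamma>)) (\<lambda>l. \<i> * lin3 n ?t (1/2) (1/2) 0 l) j"
  proof -
    have e: "mvec {0..n} (AX n) (uu n ?t) = (\<lambda>l. \<i> * lin3 n ?t (1/2) (1/2) 0 l)"
      by (rule ext) (simp only: mvec_AX Sx_lin3)
    show ?thesis unfolding sum_to_mvec mvec_mmul[OF finite_atLeastAtMost] e ..
  qed
  ultimately show ?thesis unfolding SRU2_eq[OF j k] by (simp add: mult.assoc)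
qed

lemma rot_sum:
  assumes j: "j \<le> n"
  shows "(\<Sum>l\<in>{0..n}. EE n (complex_of_real (pi/2)) j l * complex_of_real (aa n l) *
           (\<i> * complex_of_real (real l - real j) * cis (\<theta> * (real l - real j))))
       = cis (- \<theta> * real j) * mvec {0..n} (EE n (complex_of_real (pi/2))) (\<lambda>l. \<i> * lin3 n \<theta> (-\<i>/2) (\<i>/2) 1 l) j"
proof -
  let ?E = "EE n (complex_of_real (pi/2))"
  let ?u = "uu n \<theta>"
  have fin: "finite {0..n}" by simp
  have "(\<Sum>l\<in>{0..n}. ?E j l * complex_of_real (aa n l) * (\<i> * complex_of_real (real l - real j) * cis (\<theta> * (real l - real j))))
      = cis (- \<theta> * real j) * \<i> * (\<Sum>l\<in>{0..n}. ?E j l * (complex_of_real (spin_M n l) - complex_of_real (spin_M n j)) * ?u l)"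
    unfolding cis_shift uu_def spin_M_def by (simp add: sum_distrib_left mult_ac)
  also have "(\<Sum>l\<in>{0..n}. ?E j l * (complex_of_real (spin_M n l) - complex_of_real (spin_M n j)) * ?u l)
      = mvec {0..n} ?E (Vz n \<theta>) j - (\<Sum>l\<in>{0..n}. mmul {0..n} (Sz n) ?E j l * ?u l)"
  proof -
    have "(\<Sum>l\<in>{0..n}. ?E j l * (complex_of_real (spin_M n l) - complex_of_real (spin_M n j)) * ?u l)
        = (\<Sum>l\<in>{0..n}. ?E j l * Vz n \<theta> l - mmul {0..n} (Sz n) ?E j l * ?u l)"
    proof (intro sum.cong refl)
      fix l assume "l \<in> {0..n}"
      then have l: "l \<le> n" by simp
      show "?E j l * (complex_of_real (spin_M n l) - complex_of_real (spin_M n j)) * ?u l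
          = ?E j l * Vz n \<theta> l - mmul {0..n} (Sz n) ?E j l * ?u l"
        unfolding Vz_at[OF l] mmul_Sz_left using j by (simp add: algebra_simps)
    qed
    then show ?thesis by (simp only: sum_subtractf mvec_def)
  qed
  also have "(\<Sum>l\<in>{0..n}. mmul {0..n} (Sz n) ?E j l * ?u l) = - mvec {0..n} (mmul {0..n} ?E (Sy n)) ?u j"
    unfolding mvec_def using E_rot[OF j] by (simp add: sum_negf[symmetric])
  also have "mvec {0..n} ?E (Vz n \<theta>) j - - mvec {0..n} (mmul {0..n} ?E (Sy n)) ?u j
      = mvec {0..n} ?E (lin3 n \<theta> (-\<i>/2) (\<i>/2) 1) j"
  proof -
    have lin: "lin3 n \<theta> (-\<i>/2) (\<i>/2) 1 = (\<lambda>l. mvec {0..n} (Sy n) ?u l + Vz n \<theta> l)"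
      by (rule ext) (rule Sy_lin3[symmetric])
    show ?thesis unfolding mvec_mmul[OF fin] lin mvec_def[of "{0..n}" ?E]
      by (simp only: minus_minus diff_conv_add_uminus distrib_left sum.distrib add.commute)
  qed
  finally show ?thesis by (simp add: mvec_def sum_distrib_left mult_ac)
qed

lemma dphi:
  assumes j: "j \<le> n" and k: "k \<le> m"
  shows "((\<lambda>p. SRU2 n m (pi/2) p \<mu> (j, k)) has_vector_derivative
      complex_of_real (aa m k) * cis (- th m \<Phi> \<mu> k * real j) *
      mvec {0..n} (EE n (complex_of_real (pi/2))) (\<lambda>l. \<i> * lin3 n (th m \<Phi> \<mu> k) (-\<i>/2) (\<i>/2) 1 l) j) (at \<Phi>)"
proof -
  let ?E = "EE n (complex_of_real (pi/2))"
  have "((\<lambda>p. complex_of_real (aa m k) * (\<Sum>l\<in>{0..n}. ?E j l * complex_of_real (aa n l) * cis ((p + \<mu> * spin_M m k) * (real l - real j))))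
      has_vector_derivative complex_of_real (aa m k) * (\<Sum>l\<in>{0..n}. ?E j l * complex_of_real (aa n l) *
         (\<i> * complex_of_real (real l - real j) * cis ((\<Phi> + \<mu> * spin_M m k) * (real l - real j))))) (at \<Phi>)"
    by (intro has_vector_derivative_mult_right has_vector_derivative_sum cis_lin_deriv)
  then show ?thesis unfolding SRU2_eq[OF j k] rot_sum[OF j] by (simp add: mult.assoc)
qed



definition Qx :: "nat \<Rightarrow> real \<Rightarrow> real" where
  "Qx n t = (real n ^ 2 + real n) / 8 + (real n ^ 2 - real n) / 8 * cos (2 * t)"
definition Rx :: "nat \<Rightarrow> real \<Rightarrow> real" where "Rx n t = real n / 2 * cos t"
definition Qw :: "nat \<Rightarrow> real \<Rightarrow> real" where
  "Qw n t = (real n ^ 2 + real n) / 8 - (real n ^ 2 - real n) / 8 * cos (2 * t) + real n / 4"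
definition Rw :: "nat \<Rightarrow> real \<Rightarrow> real" where "Rw n t = - (real n / 2 * sin t)"

lemma aa_sq2: "aa m k ^ 2 = hh m k"
  using aa_sq by (simp add: power2_eq_square)

lemma IPhi:
  "qfi (two_idx n m) (\<lambda>p. SRU2 n m (pi/2) p \<mu>) \<Phi>
   = 4 * ((\<Sum>k\<in>{0..m}. hh m k * Qw n (th m \<Phi> \<mu> k)) - (\<Sum>k\<in>{0..m}. hh m k * Rw n (th m \<Phi> \<mu> k))\<^sup>2)"
proof -
  let ?E = "EE n (complex_of_real (pi/2))"
  let ?L = "\<lambda>k. lin3 n (th m \<Phi> \<mu> k) (-\<i>/2) (\<i>/2) 1"
  define dP where "dP = (\<lambda>(j, k). complex_of_real (aa m k) * cis (- th m \<Phi> \<mu> k * real j) *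
      mvec {0..n} ?E (\<lambda>l. \<i> * ?L k l) j)"
  have U: "\<And>l p. l \<in> {0..n} \<Longrightarrow> p \<in> {0..n} \<Longrightarrow> (\<Sum>j\<in>{0..n}. cnj (?E j l) * ?E j p) = mid l p"
    by (rule EE_unitary)
  have D: "((\<lambda>s. SRU2 n m (pi/2) s \<mu> i) has_vector_derivative dP i) (at \<Phi>)" if i2: "i \<in> two_idx n m" for i
  proof -
    obtain j k where i: "i = (j, k)" and j: "j \<le> n" and k: "k \<le> m"
      using i2 unfolding two_idx_def spin_idx_def by (cases i) auto
    show ?thesis unfolding i dP_def using dphi[OF j k] by simp
  qed
  have c1: "cinner (two_idx n m) (SRU2 n m (pi/2) \<Phi> \<mu>) dP
      = (\<Sum>k\<in>{0..m}. complex_of_real (aa m k ^ 2) * cinner {0..n} (uu n (th m \<Phi> \<mu> k)) (\<lambda>l. \<i> * ?L k l))"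
    by (rule cinner_assemble[OF U, where ph="\<lambda>k j. - th m \<Phi> \<mu> k * real j" and b="aa m"]) (simp_all add: psi_form dP_def)
  have c2: "cinner (two_idx n m) dP dP
      = (\<Sum>k\<in>{0..m}. complex_of_real (aa m k ^ 2) * cinner {0..n} (\<lambda>l. \<i> * ?L k l) (\<lambda>l. \<i> * ?L k l))"
    by (rule cinner_assemble[OF U, where ph="\<lambda>k j. - th m \<Phi> \<mu> k * real j" and b="aa m"]) (simp_all add: dP_def)
  have c1': "cinner (two_idx n m) (SRU2 n m (pi/2) \<Phi> \<mu>) dP
      = \<i> * complex_of_real (\<Sum>k\<in>{0..m}. hh m k * Rw n (th m \<Phi> \<mu> k))"
    unfolding c1 cinner_scale_right RQ_w aa_sq2 Rw_def by (simp add: sum_distrib_left mult_ac)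
  have c2': "cinner (two_idx n m) dP dP = complex_of_real (\<Sum>k\<in>{0..m}. hh m k * Qw n (th m \<Phi> \<mu> k))"
    unfolding c2 cinner_scale_right cinner_scale_left RQ_w aa_sq2 of_real_sum
    by (intro sum.cong refl) (simp add: Qw_def)
  have q: "qfi (two_idx n m) (\<lambda>p. SRU2 n m (pi/2) p \<mu>) \<Phi>
     = 4 * (Re (cinner (two_idx n m) dP dP) - (cmod (cinner (two_idx n m) (SRU2 n m (pi/2) \<Phi> \<mu>) dP))\<^sup>2)"
    by (rule qfi_eval) (rule D)
  show ?thesis unfolding q c1' c2' by (simp add: norm_mult del: of_real_sum)
qed

lemma Igam:
  "qfi (two_idx n m) (\<lambda>g. SRU2 n m g \<Phi> \<mu>) \<gamma>
   = 4 * ((\<Sum>k\<in>{0..m}. hh m k * Qx n (th m \<Phi> \<mu> k)) - (\<Sum>k\<in>{0..m}. hh m k * Rx n (th m \<Phi> \<mu> k))\<^sup>2)"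
proof -
  let ?E = "EE n (complex_of_real \<gamma>)"
  let ?L = "\<lambda>k. lin3 n (th m \<Phi> \<mu> k) (1/2) (1/2) 0"
  define dP where "dP = (\<lambda>(j, k). complex_of_real (aa m k) * cis (- th m \<Phi> \<mu> k * real j) *
      mvec {0..n} ?E (\<lambda>l. \<i> * ?L k l) j)"
  have U: "\<And>l p. l \<in> {0..n} \<Longrightarrow> p \<in> {0..n} \<Longrightarrow> (\<Sum>j\<in>{0..n}. cnj (?E j l) * ?E j p) = mid l p"
    by (rule EE_unitary)
  have D: "((\<lambda>s. SRU2 n m s \<Phi> \<mu> i) has_vector_derivative dP i) (at \<gamma>)" if i2: "i \<in> two_idx n m" for i
  proof -
    obtain j k where i: "i = (j, k)" and j: "j \<le> n" and k: "k \<le> m"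
      using i2 unfolding two_idx_def spin_idx_def by (cases i) auto
    show ?thesis unfolding i dP_def using dgam[OF j k] by simp
  qed
  have c1: "cinner (two_idx n m) (SRU2 n m \<gamma> \<Phi> \<mu>) dP
      = (\<Sum>k\<in>{0..m}. complex_of_real (aa m k ^ 2) * cinner {0..n} (uu n (th m \<Phi> \<mu> k)) (\<lambda>l. \<i> * ?L k l))"
    by (rule cinner_assemble[OF U, where ph="\<lambda>k j. - th m \<Phi> \<mu> k * real j" and b="aa m"]) (simp_all add: psi_form dP_def)
  have c2: "cinner (two_idx n m) dP dP
      = (\<Sum>k\<in>{0..m}. complex_of_real (aa m k ^ 2) * cinner {0..n} (\<lambda>l. \<i> * ?L k l) (\<lambda>l. \<i> * ?L k l))"
    by (rule cinner_assemble[OF U, where ph="\<lambda>k j. - th m \<Phi> \<mu> k * real j" and b="aa m"]) (simp_all add: dP_def)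
  have c1': "cinner (two_idx n m) (SRU2 n m \<gamma> \<Phi> \<mu>) dP
      = \<i> * complex_of_real (\<Sum>k\<in>{0..m}. hh m k * Rx n (th m \<Phi> \<mu> k))"
    unfolding c1 cinner_scale_right RQ_x aa_sq2 Rx_def by (simp add: sum_distrib_left mult_ac)
  have c2': "cinner (two_idx n m) dP dP = complex_of_real (\<Sum>k\<in>{0..m}. hh m k * Qx n (th m \<Phi> \<mu> k))"
    unfolding c2 cinner_scale_right cinner_scale_left RQ_x aa_sq2 of_real_sum
    by (intro sum.cong refl) (simp add: Qx_def)
  have q: "qfi (two_idx n m) (\<lambda>g. SRU2 n m g \<Phi> \<mu>) \<gamma>
     = 4 * (Re (cinner (two_idx n m) dP dP) - (cmod (cinner (two_idx n m) (SRU2 n m \<gamma> \<Phi> \<mu>) dP))\<^sup>2)"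
    by (rule qfi_eval) (rule D)
  show ?thesis unfolding q c1' c2' by (simp add: norm_mult del: of_real_sum)
qed



lemma cis_binom: "(\<Sum>k\<in>{0..m}. complex_of_real (hh m k) * cis (b * spin_M m k)) = complex_of_real (cos (b/2) ^ m)"
proof -
  let ?x = "cis (b/2) / 2" and ?y = "cis (- (b/2)) / 2"
  have xy: "?x + ?y = complex_of_real (cos (b/2))"
    by (simp add: cis_expand complex_eq_iff)
  have "(?x + ?y) ^ m = (\<Sum>k\<le>m. of_nat (m choose k) * ?x ^ k * ?y ^ (m - k))"
    by (rule binomial_ring)
  also have "\<dots> = (\<Sum>k\<le>m. complex_of_real (hh m k) * cis (b * spin_M m k))"
  proof (intro sum.cong refl)
    fix k assume "k \<in> {..m}"
    then have k: "k \<le> m" by simp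
    have p2: "(2::complex) ^ k * 2 ^ (m - k) = 2 ^ m" using k by (simp add: power_add[symmetric])
    have "?x ^ k * ?y ^ (m - k) = (cis (b/2) ^ k * cis (- (b/2)) ^ (m - k)) / (2 ^ k * 2 ^ (m - k))"
      by (simp add: power_divide)
    also have "\<dots> = cis (real k * (b/2) + real (m - k) * (- (b/2))) / 2 ^ m"
      unfolding p2 by (simp only: Complex.DeMoivre cis_mult)
    also have "real k * (b/2) + real (m - k) * (- (b/2)) = b * spin_M m k"
      using k by (simp add: spin_M_def of_nat_diff field_simps)
    finally have e: "?x ^ k * ?y ^ (m - k) = cis (b * spin_M m k) / 2 ^ m" .
    show "of_nat (m choose k) * ?x ^ k * ?y ^ (m - k) = complex_of_real (hh m k) * cis (b * spin_M m k)"
      unfolding mult.assoc e hh_def by simp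
  qed
  finally show ?thesis unfolding xy atLeast0AtMost by simp
qed

lemma cos_sum: "(\<Sum>k\<in>{0..m}. hh m k * cos (a + b * spin_M m k)) = cos a * cos (b/2) ^ m"
  and sin_sum: "(\<Sum>k\<in>{0..m}. hh m k * sin (a + b * spin_M m k)) = sin a * cos (b/2) ^ m"
proof -
  have "(\<Sum>k\<in>{0..m}. complex_of_real (hh m k) * cis (a + b * spin_M m k))
      = cis a * (\<Sum>k\<in>{0..m}. complex_of_real (hh m k) * cis (b * spin_M m k))"
    by (simp add: sum_distrib_left cis_mult[symmetric] mult_ac)
  also have "\<dots> = cis a * complex_of_real (cos (b/2) ^ m)" by (simp only: cis_binom)
  finally have e: "(\<Sum>k\<in>{0..m}. complex_of_real (hh m k) * cis (a + b * spin_M m k)) = cis a * complex_of_real (cos (b/2) ^ m)" .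
  from arg_cong[OF e, of Re] show "(\<Sum>k\<in>{0..m}. hh m k * cos (a + b * spin_M m k)) = cos a * cos (b/2) ^ m"
    by (simp add: Re_sum)
  from arg_cong[OF e, of Im] show "(\<Sum>k\<in>{0..m}. hh m k * sin (a + b * spin_M m k)) = sin a * cos (b/2) ^ m"
    by (simp add: Im_sum)
qed

lemma hh_sum1: "(\<Sum>k\<in>{0..m}. hh m k) = 1"
  using cos_sum[of m 0 0] by simp

lemma S_Qx: "(\<Sum>k\<in>{0..m}. hh m k * Qx n (th m \<Phi> \<mu> k)) = (real n ^ 2 + real n) / 8 + (real n ^ 2 - real n) / 8 * (cos (2 * \<Phi>) * cos \<mu> ^ m)"
proof -
  have "(\<Sum>k\<in>{0..m}. hh m k * Qx n (th m \<Phi> \<mu> k))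
      = (real n ^ 2 + real n) / 8 * (\<Sum>k\<in>{0..m}. hh m k) + (real n ^ 2 - real n) / 8 * (\<Sum>k\<in>{0..m}. hh m k * cos (2 * \<Phi> + (2 * \<mu>) * spin_M m k))"
  proof -
    have "\<And>k. hh m k * Qx n (th m \<Phi> \<mu> k) = (real n ^ 2 + real n) / 8 * hh m k + (real n ^ 2 - real n) / 8 * (hh m k * cos (2 * \<Phi> + (2 * \<mu>) * spin_M m k))"
      by (simp add: Qx_def algebra_simps)
    then show ?thesis by (simp only: sum.distrib sum_distrib_left)
  qed
  then show ?thesis unfolding hh_sum1 cos_sum by simp
qed

lemma S_Qw: "(\<Sum>k\<in>{0..m}. hh m k * Qw n (th m \<Phi> \<mu> k)) = (real n ^ 2 + real n) / 8 + real n / 4 - (real n ^ 2 - real n) / 8 * (cos (2 * \<Phi>) * cos \<mu> ^ m)"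
proof -
  have "(\<Sum>k\<in>{0..m}. hh m k * Qw n (th m \<Phi> \<mu> k))
      = ((real n ^ 2 + real n) / 8 + real n / 4) * (\<Sum>k\<in>{0..m}. hh m k) - (real n ^ 2 - real n) / 8 * (\<Sum>k\<in>{0..m}. hh m k * cos (2 * \<Phi> + (2 * \<mu>) * spin_M m k))"
  proof -
    have "\<And>k. hh m k * Qw n (th m \<Phi> \<mu> k) = ((real n ^ 2 + real n) / 8 + real n / 4) * hh m k - (real n ^ 2 - real n) / 8 * (hh m k * cos (2 * \<Phi> + (2 * \<mu>) * spin_M m k))"
      by (simp add: Qw_def algebra_simps)
    then show ?thesis by (simp only: sum_subtractf sum_distrib_left)
  qed
  then show ?thesis unfolding hh_sum1 cos_sum by simp
qed

lemma S_Rx: "(\<Sum>k\<in>{0..m}. hh m k * Rx n (th m \<Phi> \<mu> k)) = real n / 2 * (cos \<Phi> * cos (\<mu>/2) ^ m)"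
proof -
  have "\<And>k. hh m k * Rx n (th m \<Phi> \<mu> k) = real n / 2 * (hh m k * cos (\<Phi> + \<mu> * spin_M m k))"
    by (simp add: Rx_def)
  then show ?thesis by (simp only: sum_distrib_left[symmetric] cos_sum)
qed

lemma S_Rw: "(\<Sum>k\<in>{0..m}. hh m k * Rw n (th m \<Phi> \<mu> k)) = - (real n / 2 * (sin \<Phi> * cos (\<mu>/2) ^ m))"
proof -
  have "\<And>k. hh m k * Rw n (th m \<Phi> \<mu> k) = - (real n / 2 * (hh m k * sin (\<Phi> + \<mu> * spin_M m k)))"
    by (simp add: Rw_def)
  then show ?thesis by (simp only: sum_negf sum_distrib_left[symmetric] sin_sum)
qed

lemma IPhi_pi:
  assumes "m \<ge> 1"
  shows "qfi (two_idx n m) (\<lambda>p. SRU2 n m (pi/2) p pi) \<Phi>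
     = 4 * ((real n ^ 2 + real n) / 8 + real n / 4 - (real n ^ 2 - real n) / 8 * (cos (2 * \<Phi>) * (-1) ^ m))"
proof -
  have z: "cos (pi / 2) ^ m = 0" using assms by simp
  show ?thesis unfolding IPhi S_Qw S_Rw z by simp
qed

lemma alg_final:
  fixes n c s C K :: real
  assumes "s ^ 2 + c ^ 2 = 1"
  shows "4 * ((n ^ 2 + n) / 8 + n / 4 - (n ^ 2 - n) / 8 * K - (- (n / 2 * (s * C)))\<^sup>2)
       + 4 * ((n ^ 2 + n) / 8 + (n ^ 2 - n) / 8 * K - (n / 2 * (c * C))\<^sup>2)
       = 4 * (n / 2) * (n / 2 + 1 - n / 2 * C ^ 2)"
proof -
  have e: "(- (n / 2 * (s * C)))\<^sup>2 + (n / 2 * (c * C))\<^sup>2 = (n / 2 * C)\<^sup>2 * (s ^ 2 + c ^ 2)"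
    by (simp add: power2_eq_square algebra_simps)
  have "4 * ((n ^ 2 + n) / 8 + n / 4 - (n ^ 2 - n) / 8 * K - (- (n / 2 * (s * C)))\<^sup>2)
       + 4 * ((n ^ 2 + n) / 8 + (n ^ 2 - n) / 8 * K - (n / 2 * (c * C))\<^sup>2)
       = (n ^ 2 + n) + n - 4 * ((- (n / 2 * (s * C)))\<^sup>2 + (n / 2 * (c * C))\<^sup>2)"
    by (simp add: field_simps)
  also have "\<dots> = (n ^ 2 + n) + n - 4 * (n / 2 * C)\<^sup>2" unfolding e assms by simp
  also have "\<dots> = 4 * (n / 2) * (n / 2 + 1 - n / 2 * C ^ 2)" by (simp add: field_simps power2_eq_square)
  finally show ?thesis .
qed

theorem mainTheorem9:
  fixes nM nP :: nat
  assumes "nM \<ge> 1" and "nP \<ge> 1"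
  shows "(\<forall>\<Phi> \<mu> \<gamma> :: real.
            qfi (two_idx nM nP) (\<lambda>\<phi>. SRU2 nM nP (pi/2) \<phi> \<mu>) \<Phi>
          + qfi (two_idx nM nP) (\<lambda>g. SRU2 nM nP g \<Phi> \<mu>) \<gamma>
          = 4 * spin_S nM * (spin_S nM + 1 - spin_S nM * cos (\<mu>/2) ^ (2 * nP)))
       \<and> (\<exists>\<Phi>. qfi (two_idx nM nP) (\<lambda>\<phi>. SRU2 nM nP (pi/2) \<phi> pi) \<Phi>
               = 4 * (spin_S nM)\<^sup>2 + 2 * spin_S nM)
       \<and> (\<forall>\<Phi>. qfi (two_idx nM nP) (\<lambda>\<phi>. SRU2 nM nP (pi/2) \<phi> pi) \<Phi>
               \<le> 4 * (spin_S nM)\<^sup>2 + 2 * spin_S nM)"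
proof (intro conjI allI)
  fix \<Phi> \<mu> \<gamma> :: real
  let ?C = "cos (\<mu>/2) ^ nP"
  have p: "cos (\<mu>/2) ^ (2 * nP) = ?C ^ 2" by (simp add: power_mult[symmetric] mult.commute)
  have sc: "sin \<Phi> ^ 2 = 1 - cos \<Phi> ^ 2" by (simp add: sin_squared_eq)
  show "qfi (two_idx nM nP) (\<lambda>\<phi>. SRU2 nM nP (pi/2) \<phi> \<mu>) \<Phi>
          + qfi (two_idx nM nP) (\<lambda>g. SRU2 nM nP g \<Phi> \<mu>) \<gamma>
          = 4 * spin_S nM * (spin_S nM + 1 - spin_S nM * cos (\<mu>/2) ^ (2 * nP))"
    unfolding IPhi Igam S_Qw S_Rw S_Qx S_Rx p spin_S_def
    by (rule alg_final) (simp add: sin_cos_squared_add)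
next
  let ?V = "\<lambda>\<Phi>. qfi (two_idx nM nP) (\<lambda>\<phi>. SRU2 nM nP (pi/2) \<phi> pi) \<Phi>"
  have V: "?V \<Phi> = 4 * ((real nM ^ 2 + real nM) / 8 + real nM / 4 - (real nM ^ 2 - real nM) / 8 * (cos (2 * \<Phi>) * (-1) ^ nP))" for \<Phi>
    by (rule IPhi_pi[OF assms(2)])
  have nn: "0 \<le> real nM ^ 2 - real nM" using assms(1) by (simp add: power2_eq_square)
  show "\<exists>\<Phi>. ?V \<Phi> = 4 * (spin_S nM)\<^sup>2 + 2 * spin_S nM"
  proof (cases "even nP")
    case True
    show ?thesis
      by (rule exI[of _ "pi/2"]) (simp add: V True spin_S_def field_simps power2_eq_square)
  next
    case False
    show ?thesis
      by (rule exI[of _ 0]) (simp add: V False spin_S_def field_simps power2_eq_square)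
  qed
  fix \<Phi> :: real
  have b: "- 1 \<le> cos (2 * \<Phi>) * (-1) ^ nP"
  proof (cases "even nP")
    case True then show ?thesis by simp
  next
    case False then show ?thesis by simp
  qed
  have "(real nM ^ 2 - real nM) / 8 * (- 1) \<le> (real nM ^ 2 - real nM) / 8 * (cos (2 * \<Phi>) * (-1) ^ nP)"
    using b nn by (intro mult_left_mono) auto
  then show "?V \<Phi> \<le> 4 * (spin_S nM)\<^sup>2 + 2 * spin_S nM"
    unfolding V spin_S_def by (simp add: field_simps power2_eq_square)
qed


end
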